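(* Let $E=(E^0,E^1,r,s)$ be a graph. (a) Let $k$ be a field and $\rho_{E,k}:L_k(E)\to\mathrm{End}_k V_{(\partial E,k)}$ the representation described below. For each $\alpha\in\partial E$ the subspace $V_{([\alpha],k)}:=\mathrm{span}_k[\alpha]$ is $\rho_{E,k}$-invariant and the restriction $\rho_{([\alpha],k)}$ of $\rho_{E,k}$ to it is an irreducible representation of $L_k(E)$. Moreover $V_{(\partial E,k)}=\bigoplus_{[\alpha]\in\widetilde{\partial}E}V_{([\alpha],k)}$ and $\rho_{E,k}=\bigoplus_{[\alpha]\in\widetilde{\partial}E}\rho_{([\alpha],k)}$ is a decomposition of $\rho_{E,k}$ as a direct sum of irreducible representations. For any $\alpha,\beta\in\partial E$ the following are equivalent: (i) $\rho_{([\alpha],k)}$ is algebraically equivalent to $\rho_{([\beta],k)}$; (ii) $\rho_{([\alpha],k)}=\rho_{([\beta],k)}$; (iii) $\alpha$ and $\beta$ are shift-tail equivalent (i.e. $[\alpha]=[\beta]$). (b) Let $\pi_E:C^*(E)\to\mathbb{B}(\mathcal{H}_{\partial E})$ be the $*$-representation described below. For each $\alpha\in\partial E$ the closed subspace $\mathcal{H}_{[\alpha]}:=\ell^2([\alpha])$ is $\pi_E$-invariant and the restriction $\pi_{[\alpha]}$ of $\pi_E$ to it is an irreducible $*$-representation of $C^*(E)$. Moreover $\mathcal{H}_{\partial E}=\bigoplus_{[\alpha]\in\widetilde{\partial}E}\mathcal{H}_{[\alpha]}$ and $\pi_E=\bigoplus_{[\alpha]\in\widetilde{\partial}E}\pi_{[\alpha]}$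 is a decomposition of $\pi_E$ as a direct sum of irreducible representations. For any $\alpha,\beta\in\partial E$ the following are equivalent: (i) $\pi_{[\alpha]}$ is unitarily equivalent to $\pi_{[\beta]}$; (ii) $\pi_{[\alpha]}=\pi_{[\beta]}$; (iii) $[\alpha]=[\beta]$.
   Context: A graph $E=(E^0,E^1,r,s)$ has vertex set $E^0$, edge set $E^1$, range and source maps; no countability assumed. A vertex is singular if it emits no edges or infinitely many edges, regular otherwise. Finite paths include vertices (length $0$, $s(v)=r(v)=v$) and sequences $e_1\cdots e_n$ with $r(e_i)=s(e_{i+1})$; infinite paths are sequences $e_1e_2\cdots$ with $r(e_i)=s(e_{i+1})$. Boundary paths: $\partial E=E^\infty\sqcup E^*_{\mathrm{sing}}$, the infinite paths together with the finite paths whose range is singular. The shift $\sigma_E$ removes the first edge (fixes vertices; sends a single edge $e$ to $r(e)$); $\alpha\sim\beta$ (shift-tail equivalent) if $\sigma_E^m(\alpha)=\sigma_E^n(\beta)$ for some $m,n\in\mathbb{N}$; $[\alpha]$ is the class, $\widetilde{\partial}E$ the set of classes. $L_k(E)$: universal $k$-algebra generated by pairwise orthogonal idempotents $p_v$ and elements $s_e,s_e^*$ with $p_{s(e)}s_e=s_e=s_ep_{r(e)}$, $p_{r(e)}s_e^*=s_e^*=s_e^*p_{s(e)}$, $s_e^*s_f=\delta_{e,f}p_{r(e)}$, $p_v=\sum_{s(e)=v}s_es_e^*$ for regular $v$. $C^*(E)$: universal $C^*$-algebra generated by mutually orthogonal projections $p_v$ and partial isometries $s_e$ with mutually orthogonal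 ranges, $s_e^*s_e=p_{r(e)}$, $s_es_e^*\le p_{s(e)}$, $p_v=\sum_{s(e)=v}s_es_e^*$ for regular $v$. $V_{(\partial E,k)}$ is the $k$-vector space with basis $\partial E$, and $\mathcal{H}_{\partial E}=\ell^2(\partial E)$ the Hilbert space with orthonormal basis $\partial E$. $\rho_{E,k}$ (resp. $\pi_E$) is the (respectively $*$-)representation determined on basis elements $\alpha\in\partial E$ by: $p_v\alpha=\alpha$ if $s(\alpha)=v$, else $0$; $s_e\alpha=e\alpha$ (concatenation) if $s(\alpha)=r(e)$, else $0$; $s_e^*\alpha=\alpha'$ if $\alpha=e\alpha'$, else $0$. Representations $\rho_1,\rho_2$ of a $k$-algebra on $V_1,V_2$ are algebraically equivalent if $\rho_1(a)=T^{-1}\rho_2(a)T$ for all $a$, for some linear isomorphism $T:V_1\to V_2$; $*$-representations are unitarily equivalent if the same holds with $T$ a unitary. Irreducible: no invariant subspaces (closed ones, for Hilbert spaces) other than $0$ and the whole space. *)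

theory Defs
  imports "HOL-Analysis.Analysis"
begin

record ('v,'e) graph =
  verts :: "'v set"
  edges :: "'e set"
  rng   :: "'e \<Rightarrow> 'v"
  src   :: "'e \<Rightarrow> 'v"

definition wf_graph :: "('v,'e) graph \<Rightarrow> bool" where
  "wf_graph G \<longleftrightarrow> rng G ` edges G \<subseteq> verts G \<and> src G ` edges G \<subseteq> verts G"

text \<open>A path is either a finite path (start vertex together with a list of edges;
  the empty list gives the vertex as path of length 0) or an infinite path.\<close>
datatype ('v,'e) path = FinP 'v "'e list" | InfP "nat \<Rightarrow> 'e"

definition emits :: "('v,'e) graph \<Rightarrow> 'v \<Rightarrow> 'e set" where
  "emits G v = {e \<in> edges G. src G e = v}"

definition singular :: "('v,'e) graph \<Rightarrow> 'v \<Rightarrow> bool" where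
  "singular G v \<longleftrightarrow> v \<in> verts G \<and> (emits G v = {} \<or> infinite (emits G v))"

definition fin_path :: "('v,'e) graph \<Rightarrow> 'v \<Rightarrow> 'e list \<Rightarrow> bool" where
  "fin_path G v es \<longleftrightarrow> v \<in> verts G \<and> set es \<subseteq> edges G \<and>
     (es \<noteq> [] \<longrightarrow> src G (hd es) = v) \<and>
     (\<forall>i. Suc i < length es \<longrightarrow> rng G (es ! i) = src G (es ! Suc i))"

definition inf_path :: "('v,'e) graph \<Rightarrow> (nat \<Rightarrow> 'e) \<Rightarrow> bool" where
  "inf_path G f \<longleftrightarrow> (\<forall>n. f n \<in> edges G \<and> rng G (f n) = src G (f (Suc n)))"

fun fin_range :: "('v,'e) graph \<Rightarrow> 'v \<Rightarrow> 'e list \<Rightarrow> 'v" where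
  "fin_range G v es = (if es = [] then v else rng G (last es))"

definition bpaths :: "('v,'e) graph \<Rightarrow> ('v,'e) path set" where
  "bpaths G = {InfP f | f. inf_path G f} \<union>
              {FinP v es | v es. fin_path G v es \<and> singular G (fin_range G v es)}"

fun psrc :: "('v,'e) graph \<Rightarrow> ('v,'e) path \<Rightarrow> 'v" where
  "psrc G (FinP v es) = v"
| "psrc G (InfP f) = src G (f 0)"

fun shift :: "('v,'e) graph \<Rightarrow> ('v,'e) path \<Rightarrow> ('v,'e) path" where
  "shift G (FinP v []) = FinP v []"
| "shift G (FinP v (e # es)) = FinP (rng G e) es"
| "shift G (InfP f) = InfP (\<lambda>n. f (Suc n))"

definition shift_tail :: "('v,'e) graph \<Rightarrow> ('v,'e) path \<Rightarrow> ('v,'e) path \<Rightarrow> bool" where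
  "shift_tail G \<alpha> \<beta> \<longleftrightarrow> (\<exists>m n. (shift G ^^ m) \<alpha> = (shift G ^^ n) \<beta>)"

definition tclass :: "('v,'e) graph \<Rightarrow> ('v,'e) path \<Rightarrow> ('v,'e) path set" where
  "tclass G \<alpha> = {\<beta> \<in> bpaths G. shift_tail G \<beta> \<alpha>}"

definition tclasses :: "('v,'e) graph \<Rightarrow> ('v,'e) path set set" where
  "tclasses G = tclass G ` bpaths G"

fun first_edge :: "('v,'e) path \<Rightarrow> 'e option" where
  "first_edge (FinP v []) = None"
| "first_edge (FinP v (e # es)) = Some e"
| "first_edge (InfP f) = Some (f 0)"

fun cons_edge :: "('v,'e) graph \<Rightarrow> 'e \<Rightarrow> ('v,'e) path \<Rightarrow> ('v,'e) path" where
  "cons_edge G e (FinP v es) = FinP (src G e) (e # es)"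
| "cons_edge G e (InfP f) = InfP (case_nat e f)"

text \<open>Vectors are coefficient functions on paths (supported in the boundary path
  space).  The operators below are the images of the generators under
  rho_{E,k} / pi_E, written in coordinates:
  p_v alpha = alpha if s(alpha)=v; s_e alpha = e alpha if s(alpha)=r(e);
  s_e^* alpha = alpha' if alpha = e alpha'.\<close>

definition opP :: "('v,'e) graph \<Rightarrow> 'v \<Rightarrow> (('v,'e) path \<Rightarrow> 'k::field) \<Rightarrow> (('v,'e) path \<Rightarrow> 'k)" where
  "opP G v f = (\<lambda>\<beta>. if \<beta> \<in> bpaths G \<and> psrc G \<beta> = v then f \<beta> else 0)"

definition opS :: "('v,'e) graph \<Rightarrow> 'e \<Rightarrow> (('v,'e) path \<Rightarrow> 'k::field) \<Rightarrow> (('v,'e) path \<Rightarrow> 'k)" where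
  "opS G e f = (\<lambda>\<beta>. if \<beta> \<in> bpaths G \<and> first_edge \<beta> = Some e then f (shift G \<beta>) else 0)"

definition opSs :: "('v,'e) graph \<Rightarrow> 'e \<Rightarrow> (('v,'e) path \<Rightarrow> 'k::field) \<Rightarrow> (('v,'e) path \<Rightarrow> 'k)" where
  "opSs G e f = (\<lambda>\<beta>. if \<beta> \<in> bpaths G \<and> psrc G \<beta> = rng G e then f (cons_edge G e \<beta>) else 0)"

text \<open>Formal (non-commutative, non-unital) polynomial expressions in the generators
  p_v, s_e, s_e^*.  Every element of L_k(E) (resp. of the dense *-subalgebra of C^*(E)
  generated by the generators) is represented by such an expression, and the
  representation of that element is the evaluation below.\<close>
datatype ('v,'e,'k) lexpr =
    LP 'v | LS 'e | LSs 'e | LZero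
  | LScal 'k "('v,'e,'k) lexpr"
  | LAdd "('v,'e,'k) lexpr" "('v,'e,'k) lexpr"
  | LMul "('v,'e,'k) lexpr" "('v,'e,'k) lexpr"

fun wf_expr :: "('v,'e) graph \<Rightarrow> ('v,'e,'k) lexpr \<Rightarrow> bool" where
  "wf_expr G (LP v) = (v \<in> verts G)"
| "wf_expr G (LS e) = (e \<in> edges G)"
| "wf_expr G (LSs e) = (e \<in> edges G)"
| "wf_expr G LZero = True"
| "wf_expr G (LScal c a) = wf_expr G a"
| "wf_expr G (LAdd a b) = (wf_expr G a \<and> wf_expr G b)"
| "wf_expr G (LMul a b) = (wf_expr G a \<and> wf_expr G b)"

fun evalop :: "('v,'e) graph \<Rightarrow> ('v,'e,'k::field) lexpr \<Rightarrow> (('v,'e) path \<Rightarrow> 'k) \<Rightarrow> (('v,'e) path \<Rightarrow> 'k)" where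
  "evalop G (LP v) = opP G v"
| "evalop G (LS e) = opS G e"
| "evalop G (LSs e) = opSs G e"
| "evalop G LZero = (\<lambda>f x. 0)"
| "evalop G (LScal c a) = (\<lambda>f x. c * evalop G a f x)"
| "evalop G (LAdd a b) = (\<lambda>f x. evalop G a f x + evalop G b f x)"
| "evalop G (LMul a b) = (\<lambda>f. evalop G a (evalop G b f))"

text \<open>A representation is recorded as a pair (space, action); the action is
  defined on (expressions for) algebra elements and gives maps on the space.\<close>
type_synonym ('v,'e,'k) rep =
  "(('v,'e) path \<Rightarrow> 'k) set \<times> (('v,'e,'k) lexpr \<Rightarrow> (('v,'e) path \<Rightarrow> 'k) \<Rightarrow> (('v,'e) path \<Rightarrow> 'k))"

definition restrict_rep :: "('v,'e) graph \<Rightarrow> (('v,'e) path \<Rightarrow> 'k::field) set \<Rightarrow> ('v,'e,'k) rep" where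
  "restrict_rep G W = (W, \<lambda>a. if wf_expr G a then (\<lambda>f. if f \<in> W then evalop G a f else undefined)
                               else undefined)"

definition lin_on :: "(('v,'e) path \<Rightarrow> 'k::field) set \<Rightarrow> ((('v,'e) path \<Rightarrow> 'k) \<Rightarrow> (('v,'e) path \<Rightarrow> 'k)) \<Rightarrow> bool" where
  "lin_on A T \<longleftrightarrow> (\<forall>f\<in>A. \<forall>g\<in>A. T (\<lambda>x. f x + g x) = (\<lambda>x. T f x + T g x)) \<and>
                  (\<forall>c. \<forall>f\<in>A. T (\<lambda>x. c * f x) = (\<lambda>x. c * T f x))"

definition is_subspace :: "(('v,'e) path \<Rightarrow> 'k::field) set \<Rightarrow> bool" where
  "is_subspace W \<longleftrightarrow> (\<lambda>x. 0) \<in> W \<and> (\<forall>f\<in>W. \<forall>g\<in>W. (\<lambda>x. f x + g x) \<in> W) \<and>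
                     (\<forall>c. \<forall>f\<in>W. (\<lambda>x. c * f x) \<in> W)"

definition invariant :: "('v,'e) graph \<Rightarrow> ('v,'e,'k::field) rep \<Rightarrow> (('v,'e) path \<Rightarrow> 'k) set \<Rightarrow> bool" where
  "invariant G R W \<longleftrightarrow> (\<forall>a. wf_expr G a \<longrightarrow> (\<forall>f\<in>W. snd R a f \<in> W))"

text \<open>span_k X inside V_(dE,k): finitely supported coefficient functions supported in X.\<close>
definition Vspan :: "(('v,'e) path) set \<Rightarrow> (('v,'e) path \<Rightarrow> 'k::field) set" where
  "Vspan X = {f. finite {x. f x \<noteq> 0} \<and> {x. f x \<noteq> 0} \<subseteq> X}"

definition rho :: "('v,'e) graph \<Rightarrow> ('v,'e,'k::field) rep" where
  "rho G = restrict_rep G (Vspan (bpaths G))"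

definition rho_cls :: "('v,'e) graph \<Rightarrow> ('v,'e) path \<Rightarrow> ('v,'e,'k::field) rep" where
  "rho_cls G \<alpha> = restrict_rep G (Vspan (tclass G \<alpha>))"

definition irreducible_alg :: "('v,'e) graph \<Rightarrow> ('v,'e,'k::field) rep \<Rightarrow> bool" where
  "irreducible_alg G R \<longleftrightarrow>
     (\<forall>W. W \<subseteq> fst R \<and> is_subspace W \<and> invariant G R W \<longrightarrow> W = {\<lambda>x. 0} \<or> W = fst R)"

definition alg_equivalent :: "('v,'e) graph \<Rightarrow> ('v,'e,'k::field) rep \<Rightarrow> ('v,'e,'k) rep \<Rightarrow> bool" where
  "alg_equivalent G R1 R2 \<longleftrightarrow> (\<exists>T. bij_betw T (fst R1) (fst R2) \<and> lin_on (fst R1) T \<and>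
     (\<forall>a. wf_expr G a \<longrightarrow> (\<forall>f\<in>fst R1. snd R1 a f = inv_into (fst R1) T (snd R2 a (T f)))))"

text \<open>Internal direct sum decomposition of V along the family of subspaces indexed by
  the classes, and the corresponding decomposition of the representation.\<close>
definition alg_decomp :: "('v,'e) graph \<Rightarrow> (('v,'e) path \<Rightarrow> 'k::field) \<Rightarrow> (('v,'e) path set \<Rightarrow> (('v,'e) path \<Rightarrow> 'k)) \<Rightarrow> bool" where
  "alg_decomp G f g \<longleftrightarrow> finite {c. g c \<noteq> (\<lambda>x. 0)} \<and> {c. g c \<noteq> (\<lambda>x. 0)} \<subseteq> tclasses G \<and>
     (\<forall>c\<in>tclasses G. g c \<in> Vspan c) \<and>
     f = (\<lambda>x. \<Sum>c\<in>{c. g c \<noteq> (\<lambda>x. 0)}. g c x)"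

definition alg_direct_sum :: "('v,'e) graph \<Rightarrow> ('k::field) itself \<Rightarrow> bool" where
  "alg_direct_sum G _ \<longleftrightarrow> (\<forall>c\<in>tclasses G. Vspan c \<subseteq> (Vspan (bpaths G) :: (_ \<Rightarrow> 'k) set)) \<and>
     (\<forall>f::(_ \<Rightarrow> 'k). f \<in> Vspan (bpaths G) \<longrightarrow> (\<exists>!g. alg_decomp G f g))"

definition alg_rep_direct_sum :: "('v,'e) graph \<Rightarrow> ('k::field) itself \<Rightarrow> bool" where
  "alg_rep_direct_sum G _ \<longleftrightarrow> (\<forall>a::('v,'e,'k) lexpr. wf_expr G a \<longrightarrow>
     (\<forall>f g. f \<in> Vspan (bpaths G) \<and> alg_decomp G f g \<longrightarrow>
        snd (rho G) a f = (\<lambda>x. \<Sum>c\<in>{c. g c \<noteq> (\<lambda>x. 0)}. snd (restrict_rep G (Vspan c)) a (g c) x)))"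

definition ell2 :: "('v,'e) path set \<Rightarrow> (('v,'e) path \<Rightarrow> complex) set" where
  "ell2 X = {f. (\<forall>x. x \<notin> X \<longrightarrow> f x = 0) \<and> (\<lambda>x. (cmod (f x))\<^sup>2) summable_on UNIV}"

definition l2norm :: "(('v,'e) path \<Rightarrow> complex) \<Rightarrow> real" where
  "l2norm f = sqrt (infsum (\<lambda>x. (cmod (f x))\<^sup>2) UNIV)"

definition l2inner :: "(('v,'e) path \<Rightarrow> complex) \<Rightarrow> (('v,'e) path \<Rightarrow> complex) \<Rightarrow> complex" where
  "l2inner f g = infsum (\<lambda>x. cnj (f x) * g x) UNIV"

definition l2closed :: "(('v,'e) path \<Rightarrow> complex) set \<Rightarrow> bool" where
  "l2closed W \<longleftrightarrow> (\<forall>u f. (\<forall>n. u n \<in> W) \<and> f \<in> ell2 UNIV \<and>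
      (\<lambda>n. l2norm (\<lambda>x. u n x - f x)) \<longlonglongrightarrow> 0 \<longrightarrow> f \<in> W)"

definition piE :: "('v,'e) graph \<Rightarrow> ('v,'e,complex) rep" where
  "piE G = restrict_rep G (ell2 (bpaths G))"

definition pi_cls :: "('v,'e) graph \<Rightarrow> ('v,'e) path \<Rightarrow> ('v,'e,complex) rep" where
  "pi_cls G \<alpha> = restrict_rep G (ell2 (tclass G \<alpha>))"

definition irreducible_hil :: "('v,'e) graph \<Rightarrow> ('v,'e,complex) rep \<Rightarrow> bool" where
  "irreducible_hil G R \<longleftrightarrow>
     (\<forall>W. W \<subseteq> fst R \<and> is_subspace W \<and> l2closed W \<and> invariant G R W \<longrightarrow>
          W = {\<lambda>x. 0} \<or> W = fst R)"

definition unitarily_equivalent :: "('v,'e) graph \<Rightarrow> ('v,'e,complex) rep \<Rightarrow> ('v,'e,complex) rep \<Rightarrow> bool" where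
  "unitarily_equivalent G R1 R2 \<longleftrightarrow> (\<exists>U. bij_betw U (fst R1) (fst R2) \<and> lin_on (fst R1) U \<and>
     (\<forall>f\<in>fst R1. \<forall>g\<in>fst R1. l2inner (U f) (U g) = l2inner f g) \<and>
     (\<forall>a. wf_expr G a \<longrightarrow> (\<forall>f\<in>fst R1. snd R1 a f = inv_into (fst R1) U (snd R2 a (U f)))))"

definition l2_has_sum :: "(('v,'e) path set \<Rightarrow> (('v,'e) path \<Rightarrow> complex)) \<Rightarrow> ('v,'e) path set set \<Rightarrow> (('v,'e) path \<Rightarrow> complex) \<Rightarrow> bool" where
  "l2_has_sum g C f \<longleftrightarrow> (\<forall>\<epsilon>>0. \<exists>F0. finite F0 \<and> F0 \<subseteq> C \<and>
      (\<forall>F. finite F \<and> F0 \<subseteq> F \<and> F \<subseteq> C \<longrightarrow> l2norm (\<lambda>x. f x - (\<Sum>c\<in>F. g c x)) < \<epsilon>))"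

definition hil_decomp :: "('v,'e) graph \<Rightarrow> (('v,'e) path \<Rightarrow> complex) \<Rightarrow> (('v,'e) path set \<Rightarrow> (('v,'e) path \<Rightarrow> complex)) \<Rightarrow> bool" where
  "hil_decomp G f g \<longleftrightarrow> (\<forall>c\<in>tclasses G. g c \<in> ell2 c) \<and> l2_has_sum g (tclasses G) f"

definition hil_direct_sum :: "('v,'e) graph \<Rightarrow> bool" where
  "hil_direct_sum G \<longleftrightarrow> (\<forall>c\<in>tclasses G. ell2 c \<subseteq> ell2 (bpaths G) \<and> l2closed (ell2 c)) \<and>
     (\<forall>c\<in>tclasses G. \<forall>d\<in>tclasses G. c \<noteq> d \<longrightarrow> (\<forall>f\<in>ell2 c. \<forall>g\<in>ell2 d. l2inner f g = 0)) \<and>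
     (\<forall>f\<in>ell2 (bpaths G). \<exists>g. hil_decomp G f g)"

definition hil_rep_direct_sum :: "('v,'e) graph \<Rightarrow> bool" where
  "hil_rep_direct_sum G \<longleftrightarrow> (\<forall>a. wf_expr G a \<longrightarrow>
     (\<forall>f g. f \<in> ell2 (bpaths G) \<and> hil_decomp G f g \<longrightarrow>
        l2_has_sum (\<lambda>c. snd (restrict_rep G (ell2 c)) a (g c)) (tclasses G) (snd (piE G) a f)))"

end

theory Submission imports Defs begin

lemma bp_FinP: "FinP v es \<in> bpaths G \<longleftrightarrow> fin_path G v es \<and> singular G (fin_range G v es)"
  by (auto simp: bpaths_def)
lemma bp_InfP: "InfP f \<in> bpaths G \<longleftrightarrow> inf_path G f"
  by (auto simp: bpaths_def)

lemma bp_psrc_verts: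
  assumes "wf_graph G" "x \<in> bpaths G" shows "psrc G x \<in> verts G"
  using assms by (cases x) (auto simp: bp_FinP bp_InfP fin_path_def inf_path_def wf_graph_def)

lemma bp_fe_edge:
  assumes "x \<in> bpaths G" "first_edge x = Some e"
  shows "e \<in> edges G \<and> psrc G x = src G e \<and> psrc G (shift G x) = rng G e \<and> cons_edge G e (shift G x) = x"
proof (cases x)
  case (FinP v es)
  then obtain es' where es: "es = e # es'" using assms by (cases es) auto
  show ?thesis using assms FinP es
    by (cases es') (auto simp: bp_FinP fin_path_def)
next
  case (InfP f)
  then show ?thesis using assms
    by (auto simp: bp_InfP inf_path_def fun_eq_iff split: nat.split)
qed

lemma bp_fe_None:
  assumes "x \<in> bpaths G" "first_edge x = None"
  shows "x = FinP (psrc G x) [] \<and> shift G x = x"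
  using assms by (cases x rule: first_edge.cases) auto

lemma shift_bp:
  assumes "wf_graph G" "x \<in> bpaths G" shows "shift G x \<in> bpaths G"
proof (cases x rule: first_edge.cases)
  case (1 v)
  then show ?thesis using assms by simp
next
  case (2 v e es)
  have fp: "fin_path G v (e # es)" and sg: "singular G (fin_range G v (e#es))"
    using assms 2 by (auto simp: bp_FinP)
  have "fin_path G (rng G e) es"
    using fp assms(1) unfolding fin_path_def wf_graph_def
    apply (auto simp: hd_conv_nth)
    done
  moreover have "fin_range G (rng G e) es = fin_range G v (e#es)" by simp
  ultimately show ?thesis using 2 sg by (auto simp: bp_FinP)
next
  case (3 f)
  then show ?thesis using assms by (auto simp: bp_InfP inf_path_def)
qed

lemma cons_bp:
  assumes "wf_graph G" "x \<in> bpaths G" "e \<in> edges G" "psrc G x = rng G e"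
  shows "cons_edge G e x \<in> bpaths G \<and> first_edge (cons_edge G e x) = Some e \<and> shift G (cons_edge G e x) = x"
proof (cases x)
  case (FinP v es)
  have fp: "fin_path G v es" and sg: "singular G (fin_range G v es)"
    using assms FinP by (auto simp: bp_FinP)
  have "fin_path G (src G e) (e # es)"
    using fp assms FinP unfolding fin_path_def wf_graph_def
    apply (auto simp: nth_Cons split: nat.split)
    by (metis hd_conv_nth length_greater_0_conv)
  moreover have "fin_range G (src G e) (e#es) = fin_range G v es" using assms FinP by simp
  ultimately show ?thesis using FinP sg assms by (auto simp: bp_FinP)
next
  case (InfP f)
  then show ?thesis using assms
    by (auto simp: bp_InfP inf_path_def split: nat.split)
qed

lemma shift_tail_refl: "shift_tail G x x"
  unfolding shift_tail_def by blast

lemma shift_tail_sym: "shift_tail G x y \<Longrightarrow> shift_tail G y x"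
  unfolding shift_tail_def by (metis (no_types))

lemma shift_tail_trans:
  assumes "shift_tail G x y" "shift_tail G y z" shows "shift_tail G x z"
proof -
  obtain m n where 1: "(shift G ^^ m) x = (shift G ^^ n) y" using assms(1) unfolding shift_tail_def by blast
  obtain p q where 2: "(shift G ^^ p) y = (shift G ^^ q) z" using assms(2) unfolding shift_tail_def by blast
  have "(shift G ^^ (p + m)) x = (shift G ^^ (n + q)) z"
  proof -
    have "(shift G ^^ (p + m)) x = (shift G ^^ p) ((shift G ^^ m) x)" by (simp add: funpow_add)
    also have "\<dots> = (shift G ^^ (p + n)) y" using 1 by (simp add: funpow_add)
    also have "\<dots> = (shift G ^^ n) ((shift G ^^ p) y)" by (simp add: funpow_add add.commute)
    also have "\<dots> = (shift G ^^ (n + q)) z" using 2 by (simp add: funpow_add)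
    finally show ?thesis .
  qed
  then show ?thesis unfolding shift_tail_def by blast
qed

lemma shift_tail_shift: "shift_tail G (shift G x) x"
  unfolding shift_tail_def by (rule exI[of _ 0], rule exI[of _ 1]) simp

lemma tclass_sub: "tclass G a \<subseteq> bpaths G" by (auto simp: tclass_def)

lemma mem_tclass_iff:
  assumes "x \<in> bpaths G" "y \<in> bpaths G"
  shows "x \<in> tclass G y \<longleftrightarrow> tclass G x = tclass G y"
proof
  assume "x \<in> tclass G y"
  then have xy: "shift_tail G x y" by (simp add: tclass_def)
  show "tclass G x = tclass G y"
    unfolding tclass_def using xy shift_tail_trans shift_tail_sym by blast
next
  assume "tclass G x = tclass G y"
  then show "x \<in> tclass G y" using assms shift_tail_refl by (auto simp: tclass_def)
qed

lemma self_tclass: "x \<in> bpaths G \<Longrightarrow> x \<in> tclass G x"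
  by (auto simp: tclass_def shift_tail_refl)

lemma tclasses_mem_iff:
  assumes "c \<in> tclasses G" "x \<in> bpaths G"
  shows "x \<in> c \<longleftrightarrow> c = tclass G x"
  using assms mem_tclass_iff unfolding tclasses_def by blast

lemma tclasses_sub: "c \<in> tclasses G \<Longrightarrow> c \<subseteq> bpaths G"
  using tclass_sub unfolding tclasses_def by blast

definition sat :: "('v,'e) graph \<Rightarrow> ('v,'e) path set \<Rightarrow> bool" where
  "sat G X \<longleftrightarrow> X \<subseteq> bpaths G \<and> (\<forall>x\<in>bpaths G. x \<in> X \<longleftrightarrow> shift G x \<in> X)"

lemma sat_bp: "wf_graph G \<Longrightarrow> sat G (bpaths G)"
  by (auto simp: sat_def shift_bp)

lemma sat_tclass: "wf_graph G \<Longrightarrow> sat G (tclass G a)"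
  unfolding sat_def tclass_def
  using shift_bp shift_tail_trans shift_tail_shift shift_tail_sym by blast

definition mr :: "('v,'e) path set \<Rightarrow> (('v,'e) path \<Rightarrow> 'k::zero) \<Rightarrow> (('v,'e) path \<Rightarrow> 'k)" where
  "mr A f = (\<lambda>x. if x \<in> A then f x else 0)"

lemma evalop_outside: "x \<notin> bpaths G \<Longrightarrow> evalop G a f x = 0"
  by (induction a arbitrary: f) (auto simp: opP_def opS_def opSs_def)

lemma evalop_zero: "evalop G a (\<lambda>x. 0) = (\<lambda>x. 0)"
  by (induction a) (simp_all add: opP_def opS_def opSs_def)

lemma satD:
  assumes "sat G X" "x \<in> bpaths G" shows "shift G x \<in> X \<longleftrightarrow> x \<in> X"
  using assms unfolding sat_def by blast

lemma satD2: "sat G X \<Longrightarrow> x \<in> X \<Longrightarrow> x \<in> bpaths G"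
  unfolding sat_def by blast

lemma evalop_mr:
  assumes "wf_graph G" "sat G X"
  shows "wf_expr G a \<Longrightarrow> evalop G a (mr X f) = mr X (evalop G a f)"
proof (induction a arbitrary: f)
  case (LS e)
  show ?case unfolding fun_eq_iff
  proof
    fix x
    show "evalop G (LS e) (mr X f) x = mr X (evalop G (LS e) f) x"
    proof (cases "x \<in> bpaths G \<and> first_edge x = Some e")
      case True
      then have "shift G x \<in> X \<longleftrightarrow> x \<in> X" using satD[OF assms(2)] by blast
      then show ?thesis using True by (simp add: opS_def mr_def)
    next
      case False
      then show ?thesis by (auto simp add: opS_def mr_def)
    qed
  qed
next
  case (LSs e)
  show ?case unfolding fun_eq_iff
  proof
    fix x
    show "evalop G (LSs e) (mr X f) x = mr X (evalop G (LSs e) f) x"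
    proof (cases "x \<in> bpaths G \<and> psrc G x = rng G e \<and> e \<in> edges G")
      case True
      then have c: "cons_edge G e x \<in> bpaths G" "shift G (cons_edge G e x) = x"
        using cons_bp[OF assms(1), of x e] by auto
      then have "cons_edge G e x \<in> X \<longleftrightarrow> x \<in> X" using satD[OF assms(2) c(1)] by simp
      then show ?thesis using True by (simp add: opSs_def mr_def)
    next
      case False
      then show ?thesis using LSs by (auto simp: opSs_def mr_def)
    qed
  qed
next
  case (LP v)
  show ?case by (simp add: opP_def mr_def fun_eq_iff)
next
  case LZero
  show ?case by (simp add: mr_def fun_eq_iff)
next
  case (LScal c a)
  show ?case using LScal by (simp add: mr_def fun_eq_iff)
next
  case (LAdd a b)
  show ?case using LAdd by (simp add: mr_def fun_eq_iff)
next
  case (LMul a b)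
  show ?case using LMul by simp
qed

lemma finite_supp_evalop:
  assumes "finite {x. f x \<noteq> 0}"
  shows "finite {x. evalop G a f x \<noteq> 0}"
  using assms
proof (induction a arbitrary: f)
  case (LP v)
  then show ?case by (auto simp: opP_def elim: rev_finite_subset)
next
  case (LS e)
  have "{x. evalop G (LS e) f x \<noteq> 0} \<subseteq> cons_edge G e ` {x. f x \<noteq> 0}"
  proof
    fix x assume "x \<in> {x. evalop G (LS e) f x \<noteq> 0}"
    then have "x \<in> bpaths G" "first_edge x = Some e" "f (shift G x) \<noteq> 0"
      by (auto simp: opS_def split: if_splits)
    then show "x \<in> cons_edge G e ` {x. f x \<noteq> 0}"
      using bp_fe_edge by (metis (mono_tags, lifting) image_eqI mem_Collect_eq)
  qed
  then show ?case using LS by (auto elim: finite_subset)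
next
  case (LSs e)
  have "{x. evalop G (LSs e) f x \<noteq> 0} \<subseteq> shift G ` {x. f x \<noteq> 0}"
  proof
    fix x assume "x \<in> {x. evalop G (LSs e) f x \<noteq> 0}"
    then have "psrc G x = rng G e" "f (cons_edge G e x) \<noteq> 0"
      by (auto simp: opSs_def split: if_splits)
    moreover have "shift G (cons_edge G e x) = x" using \<open>psrc G x = rng G e\<close>
      by (cases x) auto
    ultimately show "x \<in> shift G ` {x. f x \<noteq> 0}"
      by (metis (mono_tags, lifting) image_eqI mem_Collect_eq)
  qed
  then show ?case using LSs by (auto elim: finite_subset)
next
  case (LScal c a)
  then show ?case by (auto elim: rev_finite_subset)
next
  case (LAdd a b)
  have "{x. evalop G (LAdd a b) f x \<noteq> 0} \<subseteq> {x. evalop G a f x \<noteq> 0} \<union> {x. evalop G b f x \<noteq> 0}"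
    by auto
  then show ?case using LAdd by (auto elim: finite_subset)
qed auto


lemma proj_eval:
  assumes "wf_graph G"
  shows "evalop G (LMul (LS e) (LSs e)) f = mr {x. x \<in> bpaths G \<and> first_edge x = Some e} f"
  unfolding fun_eq_iff
proof
  fix x
  show "evalop G (LMul (LS e) (LSs e)) f x = mr {x. x \<in> bpaths G \<and> first_edge x = Some e} f x"
  proof (cases "x \<in> bpaths G \<and> first_edge x = Some e")
    case True
    then show ?thesis using bp_fe_edge[of x G e] shift_bp[OF assms, of x]
      by (simp add: opS_def opSs_def mr_def)
  qed (auto simp: opS_def mr_def)
qed

lemma conj_eval:
  assumes "wf_graph G" "\<And>g. evalop G a g = mr A g"
  shows "evalop G (LMul (LS e) (LMul a (LSs e))) f = mr {x. x \<in> bpaths G \<and> first_edge x = Some e \<and> shift G x \<in> A} f"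
  unfolding fun_eq_iff
proof
  fix x
  show "evalop G (LMul (LS e) (LMul a (LSs e))) f x = mr {x. x \<in> bpaths G \<and> first_edge x = Some e \<and> shift G x \<in> A} f x"
  proof (cases "x \<in> bpaths G \<and> first_edge x = Some e")
    case True
    then show ?thesis using bp_fe_edge[of x G e] shift_bp[OF assms(1), of x]
      by (simp add: opS_def opSs_def mr_def assms(2))
  qed (auto simp: opS_def mr_def)
qed

fun sexpr :: "'e list \<Rightarrow> ('v,'e,'k) lexpr" where
  "sexpr [] = LZero"
| "sexpr (e # es) = LAdd (LMul (LS e) (LSs e)) (sexpr es)"

lemma sexpr_eval:
  assumes "wf_graph G"
  shows "distinct es \<Longrightarrow> evalop G (sexpr es) f = mr {x. x \<in> bpaths G \<and> (\<exists>e\<in>set es. first_edge x = Some e)} f"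
proof (induction es)
  case Nil
  then show ?case by (simp add: mr_def fun_eq_iff)
next
  case (Cons e es)
  have "evalop G (sexpr (e # es)) f = (\<lambda>x. evalop G (LMul (LS e) (LSs e)) f x + evalop G (sexpr es) f x)"
    by simp
  also have "\<dots> = mr {x. x \<in> bpaths G \<and> (\<exists>e\<in>set (e#es). first_edge x = Some e)} f"
    unfolding proj_eval[OF assms] Cons.IH[OF conjunct2[OF Cons.prems[unfolded distinct.simps]]]
    using Cons.prems by (auto simp: mr_def fun_eq_iff)
  finally show ?case .
qed

lemma sexpr_wf: "set es \<subseteq> edges G \<Longrightarrow> wf_expr G (sexpr es)"
  by (induction es) auto

definition differ :: "('v,'e) graph \<Rightarrow> nat \<Rightarrow> ('v,'e) path \<Rightarrow> ('v,'e) path \<Rightarrow> bool" where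
  "differ G k x y \<longleftrightarrow> psrc G ((shift G ^^ k) x) \<noteq> psrc G ((shift G ^^ k) y) \<or>
      first_edge ((shift G ^^ k) x) \<noteq> first_edge ((shift G ^^ k) y)"

lemma isolate_n:
  fixes \<alpha> :: "('v,'e) path"
  assumes wf: "wf_graph G"
  shows "\<alpha> \<in> bpaths G \<Longrightarrow> finite S \<Longrightarrow> S \<subseteq> bpaths G \<Longrightarrow> (\<forall>x\<in>S. \<exists>k<n. differ G k x \<alpha>) \<Longrightarrow>
    \<exists>(a::('v,'e,'k::field) lexpr) A. wf_expr G a \<and> (\<forall>f. evalop G a f = mr A f) \<and> \<alpha> \<in> A \<and> A \<inter> S = {}"
proof (induction n arbitrary: \<alpha> S)
  case 0
  then have "S = {}" by auto
  moreover have "wf_expr G (LP (psrc G \<alpha>) :: ('v,'e,'k) lexpr)" using bp_psrc_verts[OF wf 0(1)] by simp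
  moreover have "\<forall>f. evalop G (LP (psrc G \<alpha>) :: ('v,'e,'k) lexpr) f = mr {x. x \<in> bpaths G \<and> psrc G x = psrc G \<alpha>} f"
    by (simp add: opP_def mr_def)
  ultimately show ?case using 0(1) by blast
next
  case (Suc n)
  show ?case
  proof (cases "first_edge \<alpha>")
    case None
    define v where "v = psrc G \<alpha>"
    have \<alpha>: "\<alpha> = FinP v []" using bp_fe_None[OF Suc.prems(1) None] v_def by simp
    define F where "F = {e. \<exists>x\<in>S. psrc G x = v \<and> first_edge x = Some e}"
    have "F \<subseteq> (\<lambda>x. the (first_edge x)) ` S" unfolding F_def by force
    then have "finite F" using Suc.prems(2) by (auto elim: finite_subset)
    then obtain es where es: "distinct es" "set es = F" using finite_distinct_list by blast
    have Fe2: "e \<in> edges G \<and> src G e = v" if eF: "e \<in> F" for e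
    proof -
      obtain x where x: "x \<in> S" "psrc G x = v" "first_edge x = Some e" using eF unfolding F_def by blast
      then have "x \<in> bpaths G" using Suc.prems(3) by blast
      then show ?thesis using bp_fe_edge[of x G e] x by simp
    qed
    have Fe: "F \<subseteq> edges G" using Fe2 by blast
    have Fsrc: "\<And>e. e \<in> F \<Longrightarrow> src G e = v" using Fe2 by blast
    define a :: "('v,'e,'k) lexpr" where "a = LAdd (LP v) (LScal (-1) (sexpr es))"
    define A where "A = {x. x \<in> bpaths G \<and> psrc G x = v \<and> \<not> (\<exists>e\<in>F. first_edge x = Some e)}"
    have "wf_expr G a" unfolding a_def using sexpr_wf[of es G] es Fe bp_psrc_verts[OF wf Suc.prems(1)] v_def
      by simp
    moreover have "\<forall>f. evalop G a f = mr A f"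
    proof
      fix f :: "_ \<Rightarrow> 'k"
      show "evalop G a f = mr A f"
        unfolding fun_eq_iff
      proof
        fix x
        show "evalop G a f x = mr A f x"
        proof (cases "x \<in> bpaths G \<and> (\<exists>e\<in>F. first_edge x = Some e)")
          case True
          then obtain e where "e \<in> F" "first_edge x = Some e" by blast
          then have "psrc G x = v" using Fsrc bp_fe_edge[of x G e] True by simp
          then show ?thesis using True unfolding a_def A_def
            by (auto simp add: sexpr_eval[OF wf es(1)] es(2) opP_def mr_def)
        next
          case False
          then show ?thesis unfolding a_def A_def
            by (auto simp add: sexpr_eval[OF wf es(1)] es(2) opP_def mr_def)
        qed
      qed
    qed
    moreover have "\<alpha> \<in> A" unfolding A_def using Suc.prems(1) None v_def by simp
    moreover have "A \<inter> S = {}"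
    proof (rule ccontr)
      assume "A \<inter> S \<noteq> {}"
      then obtain x where x: "x \<in> A" "x \<in> S" by blast
      show False
      proof (cases "first_edge x")
        case None
        then have "x = FinP v []" using bp_fe_None[of x G] x unfolding A_def by auto
        then show False using x \<alpha> Suc.prems(4) by (auto simp: differ_def)
      next
        case (Some e)
        then have "e \<in> F" using x unfolding A_def F_def by blast
        then show False using x Some unfolding A_def by blast
      qed
    qed
    ultimately show ?thesis by blast
  next
    case (Some e)
    have e: "e \<in> edges G" "psrc G \<alpha> = src G e" "psrc G (shift G \<alpha>) = rng G e"
      using bp_fe_edge[OF Suc.prems(1) Some] by auto
    define S' where "S' = shift G ` {x\<in>S. first_edge x = Some e}"
    have "\<forall>x\<in>S'. \<exists>k<n. differ G k x (shift G \<alpha>)"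
    proof
      fix y assume "y \<in> S'"
      then obtain x where x: "x \<in> S" "first_edge x = Some e" "y = shift G x" unfolding S'_def by blast
      obtain k where k: "k < Suc n" "differ G k x \<alpha>" using Suc.prems(4) x(1) by blast
      have "psrc G x = src G e" using bp_fe_edge[of x G e] x Suc.prems(3) by blast
      then have "k \<noteq> 0" using k(2) Some x e by (cases k) (auto simp: differ_def)
      then obtain j where j: "k = Suc j" by (cases k) auto
      have "differ G j y (shift G \<alpha>)" using k(2) unfolding j differ_def x(3)
        by (simp add: funpow_Suc_right del: funpow.simps)
      then show "\<exists>k<n. differ G k y (shift G \<alpha>)" using j k(1) by auto
    qed
    moreover have "finite S'" unfolding S'_def using Suc.prems(2) by simp
    moreover have "S' \<subseteq> bpaths G" unfolding S'_def using Suc.prems(3) shift_bp[OF wf] by blast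
    ultimately obtain a' A' where a': "wf_expr G (a'::('v,'e,'k) lexpr)" "\<forall>f. evalop G a' f = mr A' f"
      "shift G \<alpha> \<in> A'" "A' \<inter> S' = {}"
      using Suc.IH[of "shift G \<alpha>" S'] shift_bp[OF wf Suc.prems(1)] by blast
    define a where "a = LMul (LS e) (LMul a' (LSs e))"
    define A where "A = {x. x \<in> bpaths G \<and> first_edge x = Some e \<and> shift G x \<in> A'}"
    have "wf_expr G a" unfolding a_def using a' e by simp
    moreover have "\<forall>f. evalop G a f = mr A f" unfolding a_def A_def
      using conj_eval[OF wf] a'(2) by blast
    moreover have "\<alpha> \<in> A" unfolding A_def using Suc.prems(1) Some a'(3) by simp
    moreover have "A \<inter> S = {}" using a'(4) unfolding A_def S'_def by blast
    ultimately show ?thesis by blast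
  qed
qed


lemma shift_pow_Fin: "\<exists>w. (shift G ^^ k) (FinP v es) = FinP w (drop k es)"
proof (induction k)
  case 0
  then show ?case by simp
next
  case (Suc k)
  then obtain w where w: "(shift G ^^ k) (FinP v es) = FinP w (drop k es)" by blast
  show ?case
  proof (cases "drop k es")
    case Nil
    then show ?thesis using w by simp
  next
    case (Cons e r)
    then have "drop (Suc k) es = r" by (metis drop_Suc tl_drop list.sel(3))
    then show ?thesis using w Cons by simp
  qed
qed

lemma fe_pow_Fin: "first_edge ((shift G ^^ k) (FinP v es)) = (if k < length es then Some (es ! k) else None)"
proof -
  obtain w where w: "(shift G ^^ k) (FinP v es) = FinP w (drop k es)" using shift_pow_Fin[where G=G and k=k and v=v and es=es] by blast
  show ?thesis
  proof (cases "k < length es")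
    case True
    then have "drop k es = es ! k # drop (Suc k) es" by (simp add: Cons_nth_drop_Suc)
    then show ?thesis using w True by simp
  next
    case False
    then show ?thesis using w by simp
  qed
qed

lemma shift_pow_Inf: "(shift G ^^ k) (InfP f) = InfP (\<lambda>n. f (n + k))"
  by (induction k) auto

lemma differ_exists:
  assumes "x \<noteq> y" shows "\<exists>k. differ G k x y"
proof (rule ccontr)
  assume "\<not> (\<exists>k. differ G k x y)"
  then have ps: "\<And>k. psrc G ((shift G ^^ k) x) = psrc G ((shift G ^^ k) y)"
    and fe: "\<And>k. first_edge ((shift G ^^ k) x) = first_edge ((shift G ^^ k) y)"
    unfolding differ_def by auto
  show False
  proof (cases x)
    case (FinP v es)
    note x = this
    show False
    proof (cases y)
      case (FinP w ds)
      have "v = w" using ps[of 0] x FinP by simp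
      have fk: "(if k < length es then Some (es ! k) else None) = (if k < length ds then Some (ds ! k) else None)" for k
        using fe[of k] unfolding x FinP fe_pow_Fin .
      have "length es = length ds"
      proof (rule ccontr)
        assume ne: "length es \<noteq> length ds"
        show False using fk[of "min (length es) (length ds)"] ne
          by (cases "length es < length ds") (auto split: if_splits simp: min_def)
      qed
      moreover have "es ! k = ds ! k" if "k < length es" for k using fk[of k] calculation that
        by simp
      ultimately have "es = ds" by (simp add: nth_equalityI)
      then show False using assms x FinP \<open>v = w\<close> by simp
    next
      case (InfP g)
      show False using fe[of "length es"] x InfP by (simp add: fe_pow_Fin shift_pow_Inf)
    qed
  next
    case (InfP f)
    note x = this
    show False
    proof (cases y)
      case (FinP w ds)
      show False using fe[of "length ds"] x FinP by (simp add: fe_pow_Fin shift_pow_Inf)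
    next
      case (InfP g)
      have "f = g" using fe x InfP by (auto simp: shift_pow_Inf fun_eq_iff)
      then show False using assms x InfP by simp
    qed
  qed
qed

lemma differ_bound:
  assumes "finite S" "\<alpha> \<notin> S" shows "\<exists>n. \<forall>x\<in>S. \<exists>k<n. differ G k x \<alpha>"
  using assms
proof (induction S rule: finite_induct)
  case empty
  then show ?case by auto
next
  case (insert y S)
  have "\<alpha> \<notin> S" "y \<noteq> \<alpha>" using insert.prems by auto
  then obtain n where n: "\<forall>x\<in>S. \<exists>k<n. differ G k x \<alpha>" using insert.IH by blast
  obtain k where k: "differ G k y \<alpha>" using differ_exists \<open>y \<noteq> \<alpha>\<close> by blast
  have "\<forall>x\<in>insert y S. \<exists>j<max n (Suc k). differ G j x \<alpha>"
  proof
    fix x assume "x \<in> insert y S"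
    then show "\<exists>j<max n (Suc k). differ G j x \<alpha>"
    proof
      assume "x = y" then show ?thesis using k by (intro exI[of _ k]) simp
    next
      assume "x \<in> S" then obtain j where "j < n" "differ G j x \<alpha>" using n by blast
      then show ?thesis by (intro exI[of _ j]) simp
    qed
  qed
  then show ?case by blast
qed

lemma isolate:
  assumes "wf_graph G" "\<alpha> \<in> bpaths G" "finite S" "S \<subseteq> bpaths G" "\<alpha> \<notin> S"
  shows "\<exists>(a::('v,'e,'k::field) lexpr) A. wf_expr G a \<and> (\<forall>f. evalop G a f = mr A f) \<and> \<alpha> \<in> A \<and> A \<inter> S = {}"
proof -
  obtain n where "\<forall>x\<in>S. \<exists>k<n. differ G k x \<alpha>" using differ_bound[OF assms(3,5)] by blast
  then show ?thesis by (rule isolate_n[OF assms(1,2,3,4)])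
qed


definition dl :: "('v,'e) path \<Rightarrow> (('v,'e) path \<Rightarrow> 'k::field)" where
  "dl b = (\<lambda>y. if y = b then 1 else 0)"

lemma fst_rr[simp]: "fst (restrict_rep G W) = W" by (simp add: restrict_rep_def)
lemma snd_rr: "wf_expr G a \<Longrightarrow> f \<in> W \<Longrightarrow> snd (restrict_rep G W) a f = evalop G a f"
  by (simp add: restrict_rep_def)

lemma mr_id: "{x. f x \<noteq> 0} \<subseteq> X \<Longrightarrow> mr X f = f"
  by (auto simp: mr_def fun_eq_iff)

lemma Vspan_inv:
  assumes "wf_graph G" "sat G X" "wf_expr G a" "f \<in> Vspan X"
  shows "evalop G a f \<in> Vspan X"
proof -
  have f: "finite {x. f x \<noteq> 0}" "{x. f x \<noteq> 0} \<subseteq> X" using assms(4) by (auto simp: Vspan_def)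
  have "evalop G a f = evalop G a (mr X f)" using mr_id[OF f(2)] by simp
  also have "\<dots> = mr X (evalop G a f)" by (rule evalop_mr[OF assms(1,2,3)])
  finally have eq: "evalop G a f = mr X (evalop G a f)" .
  have "x \<in> X" if "evalop G a f x \<noteq> 0" for x
  proof (rule ccontr)
    assume "x \<notin> X"
    then have "mr X (evalop G a f) x = 0" by (simp add: mr_def)
    then show False using fun_cong[OF eq, of x] that by simp
  qed
  then have "{x. evalop G a f x \<noteq> 0} \<subseteq> X" by blast
  then show ?thesis using finite_supp_evalop[OF f(1)] by (simp add: Vspan_def)
qed

lemma dl_Vspan: "(dl b :: _ \<Rightarrow> 'k::field) \<in> Vspan X \<longleftrightarrow> b \<in> X"
proof -
  have "{y. (dl b :: _ \<Rightarrow> 'k) y \<noteq> 0} = {b}" by (auto simp: dl_def)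
  then show ?thesis by (simp add: Vspan_def)
qed

lemma Vspan_eq: "(Vspan X :: (_ \<Rightarrow> 'k::field) set) = Vspan Y \<Longrightarrow> X = Y"
  using dl_Vspan[where 'k='k] by blast

lemma opSs_dl:
  assumes "wf_graph G" "g \<in> bpaths G" "first_edge g = Some e"
  shows "opSs G e (dl g :: _ \<Rightarrow> 'k::field) = dl (shift G g)"
  unfolding fun_eq_iff
proof
  fix x
  have g: "e \<in> edges G" "psrc G (shift G g) = rng G e" "cons_edge G e (shift G g) = g"
    using bp_fe_edge[OF assms(2,3)] by auto
  have sb: "shift G g \<in> bpaths G" using shift_bp[OF assms(1,2)] .
  show "opSs G e (dl g :: _ \<Rightarrow> 'k) x = dl (shift G g) x"
  proof (cases "x = shift G g")
    case True
    then show ?thesis using g sb by (simp add: opSs_def dl_def)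
  next
    case False
    have "cons_edge G e x \<noteq> g" if "psrc G x = rng G e"
    proof
      assume "cons_edge G e x = g"
      moreover have "shift G (cons_edge G e x) = x" using that by (cases x) auto
      ultimately show False using False by simp
    qed
    then show ?thesis using False by (auto simp: opSs_def dl_def)
  qed
qed

lemma opS_dl:
  assumes "wf_graph G" "g \<in> bpaths G" "first_edge g = Some e"
  shows "opS G e (dl (shift G g) :: _ \<Rightarrow> 'k::field) = dl g"
  unfolding fun_eq_iff
proof
  fix x
  have g: "e \<in> edges G" "psrc G (shift G g) = rng G e" "cons_edge G e (shift G g) = g"
    using bp_fe_edge[OF assms(2,3)] by auto
  show "opS G e (dl (shift G g) :: _ \<Rightarrow> 'k) x = dl g x"
  proof (cases "x = g")
    case True
    then show ?thesis using assms by (simp add: opS_def dl_def)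
  next
    case False
    have "shift G x \<noteq> shift G g" if "x \<in> bpaths G" "first_edge x = Some e"
    proof
      assume "shift G x = shift G g"
      then have "cons_edge G e (shift G x) = g" using g by simp
      then show False using bp_fe_edge[OF that] False by simp
    qed
    then show ?thesis using False by (auto simp: opS_def dl_def)
  qed
qed

lemma orbit:
  fixes W :: "(('v,'e) path \<Rightarrow> 'k::field) set"
  assumes wf: "wf_graph G" and inv: "\<And>a f. wf_expr G a \<Longrightarrow> f \<in> W \<Longrightarrow> evalop G a f \<in> W"
    and b: "b \<in> bpaths G" "dl b \<in> W"
  shows "\<forall>g\<in>tclass G b. dl g \<in> W"
proof -
  have up: "dl (shift G g) \<in> W" if "g \<in> bpaths G" "dl g \<in> W" for g
  proof (cases "first_edge g")
    case None
    then show ?thesis using bp_fe_None[OF that(1)] that by simp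
  next
    case (Some e)
    have "evalop G (LSs e) (dl g) \<in> W" using inv[of "LSs e" "dl g"] that bp_fe_edge[OF that(1) Some] by simp
    moreover have "evalop G (LSs e) (dl g) = dl (shift G g)" using opSs_dl[OF wf that(1) Some] by simp
    ultimately show ?thesis by metis
  qed
  have down: "dl g \<in> W" if "g \<in> bpaths G" "dl (shift G g) \<in> W" for g
  proof (cases "first_edge g")
    case None
    then show ?thesis using bp_fe_None[OF that(1)] that by simp
  next
    case (Some e)
    have "evalop G (LS e) (dl (shift G g)) \<in> W" using inv[of "LS e" "dl (shift G g)"] that bp_fe_edge[OF that(1) Some] by simp
    moreover have "evalop G (LS e) (dl (shift G g)) = dl g" using opS_dl[OF wf that(1) Some] by simp
    ultimately show ?thesis by metis
  qed
  have pw: "(shift G ^^ m) g \<in> bpaths G" if "g \<in> bpaths G" for g m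
    using that by (induction m) (auto simp: shift_bp[OF wf])
  have fwd: "dl ((shift G ^^ m) b) \<in> W" for m
    by (induction m) (auto simp: b up pw)
  have bwd: "\<And>g. g \<in> bpaths G \<Longrightarrow> dl ((shift G ^^ m) g) \<in> W \<Longrightarrow> dl g \<in> W" for m
  proof (induction m)
    case 0 then show ?case by simp
  next
    case (Suc m)
    have "dl ((shift G ^^ m) (shift G g)) \<in> W" using Suc.prems(2) by (simp add: funpow_Suc_right del: funpow.simps)
    then have "dl (shift G g) \<in> W" using Suc.IH shift_bp[OF wf Suc.prems(1)] by blast
    then show ?case using down Suc.prems(1) by blast
  qed
  show ?thesis
  proof
    fix g assume "g \<in> tclass G b"
    then obtain m n where "g \<in> bpaths G" "(shift G ^^ m) g = (shift G ^^ n) b"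
      unfolding tclass_def shift_tail_def by blast
    then show "dl g \<in> W" using bwd[of g m] fwd[of n] by simp
  qed
qed

lemma subspace_sum:
  fixes W :: "(('v,'e) path \<Rightarrow> 'k::field) set"
  assumes "is_subspace W" "finite F" "\<forall>x\<in>F. dl x \<in> W"
  shows "(\<lambda>y. \<Sum>x\<in>F. c x * dl x y) \<in> W"
  using assms(2,3)
proof (induction F rule: finite_induct)
  case empty
  then show ?case using assms(1) by (simp add: is_subspace_def)
next
  case (insert x F)
  have h1: "(\<lambda>y. c x * dl x y) \<in> W" using insert.prems assms(1) by (simp add: is_subspace_def)
  have h2: "(\<lambda>y. \<Sum>x\<in>F. c x * dl x y) \<in> W" using insert by simp
  have add: "\<And>f g. f \<in> W \<Longrightarrow> g \<in> W \<Longrightarrow> (\<lambda>x. f x + g x) \<in> W"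
    using assms(1) unfolding is_subspace_def by blast
  have "(\<lambda>y. c x * dl x y + (\<Sum>x\<in>F. c x * dl x y)) \<in> W"
    using add[OF h1 h2] by simp
  then show ?case using insert.hyps by simp
qed

lemma Vspan_sub:
  fixes W :: "(('v,'e) path \<Rightarrow> 'k::field) set"
  assumes "is_subspace W" "\<forall>x\<in>X. dl x \<in> W"
  shows "Vspan X \<subseteq> W"
proof
  fix f :: "_ \<Rightarrow> 'k" assume "f \<in> Vspan X"
  then have f: "finite {x. f x \<noteq> 0}" "{x. f x \<noteq> 0} \<subseteq> X" by (auto simp: Vspan_def)
  have "(\<lambda>y. \<Sum>x\<in>{x. f x \<noteq> 0}. f x * dl x y) \<in> W"
    using subspace_sum[OF assms(1) f(1)] f(2) assms(2) by blast
  moreover have "(\<lambda>y. \<Sum>x\<in>{x. f x \<noteq> 0}. f x * dl x y) = f"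
  proof
    fix y
    have "(\<Sum>x\<in>{x. f x \<noteq> 0}. f x * dl x y) = (\<Sum>x\<in>{x. f x \<noteq> 0}. if y = x then f y else 0)"
      by (rule sum.cong) (auto simp: dl_def)
    also have "\<dots> = f y" using f(1) by simp
    finally show "(\<Sum>x\<in>{x. f x \<noteq> 0}. f x * dl x y) = f y" .
  qed
  ultimately show "f \<in> W" by simp
qed

lemma pick_delta:
  fixes W :: "(('v,'e) path \<Rightarrow> 'k::field) set"
  assumes "is_subspace W" "f \<in> W" "f b \<noteq> 0" "(\<lambda>x. if x = b then f b else 0) \<in> W"
  shows "dl b \<in> W"
proof -
  have "(\<lambda>x. inverse (f b) * (if x = b then f b else 0)) \<in> W"
    using assms(1,4) by (simp add: is_subspace_def)
  moreover have "(\<lambda>x. inverse (f b) * (if x = b then f b else 0)) = dl b"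
    using assms(3) by (auto simp: dl_def fun_eq_iff)
  ultimately show ?thesis by simp
qed

lemma not_equiv:
  fixes T :: "(('v,'e) path \<Rightarrow> 'k::field) \<Rightarrow> (('v,'e) path \<Rightarrow> 'k)"
  assumes wf: "wf_graph G" and \<alpha>: "\<alpha> \<in> bpaths G"
    and bij: "bij_betw T V1 V2" and lin: "lin_on V1 T" and z: "(\<lambda>x. 0) \<in> V1" and d: "dl \<alpha> \<in> V1"
    and V2: "\<And>g x. g \<in> V2 \<Longrightarrow> g x \<noteq> 0 \<Longrightarrow> x \<in> bpaths G \<and> x \<noteq> \<alpha>"
    and comm: "\<And>a f. wf_expr G a \<Longrightarrow> f \<in> V1 \<Longrightarrow> evalop G a f = inv_into V1 T (evalop G a (T f))"
    and inv2: "\<And>a g. wf_expr G a \<Longrightarrow> g \<in> V2 \<Longrightarrow> evalop G a g \<in> V2"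
  shows False
proof -
  define g where "g = T (dl \<alpha>)"
  have gV: "g \<in> V2" using bij d unfolding g_def bij_betw_def by blast
  have g0: "g x = 0" for x
  proof (rule ccontr)
    assume gx: "g x \<noteq> 0"
    then have x: "x \<in> bpaths G" "x \<noteq> \<alpha>" using V2[OF gV] by auto
    obtain a A where a: "wf_expr G (a :: ('v,'e,'k) lexpr)" "\<forall>f. evalop G a f = mr A f" "\<alpha> \<in> A" "A \<inter> {x} = {}"
      using isolate[OF wf \<alpha>, of "{x}"] x by auto
    have "evalop G a (dl \<alpha>) = dl \<alpha>" using a(2,3) by (auto simp: mr_def dl_def fun_eq_iff)
    then have "dl \<alpha> = inv_into V1 T (evalop G a g)" using comm[OF a(1) d] g_def by simp
    then have "g = T (inv_into V1 T (evalop G a g))" using g_def by simp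
    also have "\<dots> = evalop G a g"
      using inv2[OF a(1) gV] bij by (simp add: bij_betw_def f_inv_into_f)
    also have "\<dots> = mr A g" using a(2) by simp
    finally have "g x = mr A g x" by simp
    then show False using a(4) gx by (simp add: mr_def)
  qed
  have T0: "T (\<lambda>x. 0) = (\<lambda>x. 0)"
  proof -
    have l: "\<And>f g. f \<in> V1 \<Longrightarrow> g \<in> V1 \<Longrightarrow> T (\<lambda>x. f x + g x) = (\<lambda>x. T f x + T g x)"
      using lin unfolding lin_on_def by blast
    have "T (\<lambda>x. 0) = (\<lambda>x. T (\<lambda>x. 0) x + T (\<lambda>x. 0) x)" using l[OF z z] by simp
    then show ?thesis by (metis add_cancel_right_right)
  qed
  have "T (dl \<alpha>) = T (\<lambda>x. 0)" using g0 T0 g_def by (auto simp: fun_eq_iff)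
  moreover have "inj_on T V1" using bij unfolding bij_betw_def by blast
  ultimately have "dl \<alpha> = (\<lambda>x. 0 :: 'k)" using d z by (meson inj_onD)
  then have "dl \<alpha> \<alpha> = (0::'k)" by metis
  then show False by (simp add: dl_def)
qed


lemma sat_tclasses: "wf_graph G \<Longrightarrow> c \<in> tclasses G \<Longrightarrow> sat G c"
  unfolding tclasses_def using sat_tclass by blast

lemma sum_at:
  assumes "finite N" "N \<subseteq> tclasses G" "\<And>c y. c \<in> N \<Longrightarrow> h c y \<noteq> 0 \<Longrightarrow> y \<in> c"
  shows "(\<Sum>c\<in>N. h c x) = (if x \<in> bpaths G \<and> tclass G x \<in> N then h (tclass G x) x else 0)"
proof (cases "x \<in> bpaths G")
  case True
  have "(\<Sum>c\<in>N. h c x) = (\<Sum>c\<in>N. if c = tclass G x then h c x else 0)"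
  proof (rule sum.cong)
    fix c assume c: "c \<in> N"
    show "h c x = (if c = tclass G x then h c x else 0)"
    proof (cases "c = tclass G x")
      case False
      then have "x \<notin> c" using tclasses_mem_iff[of c G x] c assms(2) True by blast
      then show ?thesis using assms(3)[OF c, of x] False by auto
    qed simp
  qed simp
  also have "\<dots> = (if tclass G x \<in> N then h (tclass G x) x else 0)"
    using assms(1) by (simp add: sum.delta')
  finally show ?thesis using True by simp
next
  case False
  have "h c x = 0" if "c \<in> N" for c
  proof (rule ccontr)
    assume "h c x \<noteq> 0"
    then have "x \<in> c" using assms(3) that by blast
    then show False using tclasses_sub[of c G] assms(2) that False by blast
  qed
  then show ?thesis using False by simp
qed

lemma alg_decomp_unique:
  assumes "alg_decomp G f g"
  shows "g = (\<lambda>c. if c \<in> tclasses G then mr c f else (\<lambda>x. 0))"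
proof
  fix c
  define N where "N = {c. g c \<noteq> (\<lambda>x. 0)}"
  have N: "finite N" "N \<subseteq> tclasses G" "\<forall>c\<in>tclasses G. g c \<in> Vspan c" "f = (\<lambda>x. \<Sum>c\<in>N. g c x)"
    using assms unfolding alg_decomp_def N_def by auto
  have supp: "\<And>c y. c \<in> N \<Longrightarrow> g c y \<noteq> 0 \<Longrightarrow> y \<in> c" using N(2,3) by (auto simp: Vspan_def)
  show "g c = (if c \<in> tclasses G then mr c f else (\<lambda>x. 0))"
  proof (cases "c \<in> tclasses G")
    case True
    show ?thesis unfolding fun_eq_iff
    proof
      fix x
      show "g c x = (if c \<in> tclasses G then mr c f else (\<lambda>x. 0)) x"
      proof (cases "x \<in> c")
        case False
        then show ?thesis using True N(3) by (auto simp: Vspan_def mr_def)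
      next
        case xc: True
        have xb: "x \<in> bpaths G" using tclasses_sub[OF True] xc by blast
        have ce: "c = tclass G x" using tclasses_mem_iff[OF True xb] xc by simp
        have "f x = (if tclass G x \<in> N then g (tclass G x) x else 0)"
          using sum_at[OF N(1,2), of g x, OF supp] N(4) xb by simp
        also have "\<dots> = g c x" using ce N_def by auto
        finally show ?thesis using True xc by (simp add: mr_def)
      qed
    qed
  next
    case False
    then show ?thesis using N(2) N_def by auto
  qed
qed

lemma alg_dsum:
  fixes G :: "('v,'e) graph"
  assumes wf: "wf_graph G"
  shows "alg_direct_sum G TYPE('k::field)"
  unfolding alg_direct_sum_def
proof (intro conjI ballI allI impI)
  fix c :: "('v,'e) path set" assume "c \<in> tclasses G"
  then show "Vspan c \<subseteq> (Vspan (bpaths G) :: (_ \<Rightarrow> 'k) set)"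
    using tclasses_sub[of c G] by (auto simp: Vspan_def)
next
  fix f :: "_ \<Rightarrow> 'k" assume f: "f \<in> Vspan (bpaths G)"
  define g0 where "g0 = (\<lambda>c. if c \<in> tclasses G then mr c f else (\<lambda>x. 0))"
  have fs: "finite {x. f x \<noteq> 0}" "{x. f x \<noteq> 0} \<subseteq> bpaths G" using f by (auto simp: Vspan_def)
  define N where "N = {c. g0 c \<noteq> (\<lambda>x. 0)}"
  have Nsub: "N \<subseteq> tclass G ` {x. f x \<noteq> 0}"
  proof
    fix c assume "c \<in> N"
    then have c: "c \<in> tclasses G" "mr c f \<noteq> (\<lambda>x. 0)" unfolding N_def g0_def by (auto split: if_splits)
    then obtain x where x: "x \<in> c" "f x \<noteq> 0" by (auto simp: mr_def fun_eq_iff split: if_splits)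
    then have "c = tclass G x" using tclasses_mem_iff[OF c(1)] tclasses_sub[OF c(1)] by blast
    then show "c \<in> tclass G ` {x. f x \<noteq> 0}" using x by blast
  qed
  have N1: "finite N" using Nsub fs(1) finite_subset by blast
  have N2: "N \<subseteq> tclasses G" by (auto simp: N_def g0_def)
  note N = N1 N2
  have "alg_decomp G f g0"
    unfolding alg_decomp_def
  proof (intro conjI ballI)
    show "finite {c. g0 c \<noteq> (\<lambda>x. 0)}" using N(1) N_def by simp
    show "{c. g0 c \<noteq> (\<lambda>x. 0)} \<subseteq> tclasses G" using N(2) N_def by simp
  next
    fix c assume c: "c \<in> tclasses G"
    have "{x. mr c f x \<noteq> 0} \<subseteq> {x. f x \<noteq> 0}" by (auto simp: mr_def)
    then have "finite {x. mr c f x \<noteq> 0}" using fs(1) finite_subset by blast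
    moreover have "{x. mr c f x \<noteq> 0} \<subseteq> c" by (auto simp: mr_def split: if_splits)
    ultimately show "g0 c \<in> Vspan c" using c by (simp add: g0_def Vspan_def)
  next
    have supp: "\<And>c y. c \<in> N \<Longrightarrow> g0 c y \<noteq> 0 \<Longrightarrow> y \<in> c"
      by (auto simp: g0_def mr_def split: if_splits)
    show "f = (\<lambda>x. \<Sum>c\<in>{c. g0 c \<noteq> (\<lambda>x. 0)}. g0 c x)"
    proof
      fix x
      have "(\<Sum>c\<in>{c. g0 c \<noteq> (\<lambda>x. 0)}. g0 c x) = (if x \<in> bpaths G \<and> tclass G x \<in> N then g0 (tclass G x) x else 0)"
        using sum_at[OF N, of g0 x, OF supp] N_def by simp
      also have "\<dots> = f x"
      proof (cases "x \<in> bpaths G")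
        case True
        have tc: "tclass G x \<in> tclasses G" using True by (simp add: tclasses_def)
        have g0x: "g0 (tclass G x) x = f x" using tc self_tclass[OF True] by (simp add: g0_def mr_def)
        show ?thesis
        proof (cases "tclass G x \<in> N")
          case False
          then have "g0 (tclass G x) = (\<lambda>x. 0)" unfolding N_def by simp
          then show ?thesis using g0x False by (metis)
        qed (use True g0x in simp)
      next
        case False
        then show ?thesis using fs(2) by auto
      qed
      finally show "f x = (\<Sum>c\<in>{c. g0 c \<noteq> (\<lambda>x. 0)}. g0 c x)" by simp
    qed
  qed
  then show "\<exists>!g. alg_decomp G f g"
    using alg_decomp_unique by blast
qed


lemma alg_rsum:
  fixes G :: "('v,'e) graph"
  assumes wf: "wf_graph G"
  shows "alg_rep_direct_sum G TYPE('k::field)"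
  unfolding alg_rep_direct_sum_def
proof (intro allI impI)
  fix a :: "('v,'e,'k) lexpr" and f :: "_ \<Rightarrow> 'k" and g
  assume a: "wf_expr G a" and fg: "f \<in> Vspan (bpaths G) \<and> alg_decomp G f g"
  define N where "N = {c. g c \<noteq> (\<lambda>x. 0)}"
  have N: "finite N" "N \<subseteq> tclasses G" using fg unfolding alg_decomp_def N_def by auto
  have gc: "g c = mr c f" if "c \<in> N" for c using alg_decomp_unique[of G f g] fg N(2) that by auto
  have gV: "g c \<in> Vspan c" if "c \<in> N" for c using fg N(2) that unfolding alg_decomp_def by auto
  show "snd (rho G) a f = (\<lambda>x. \<Sum>c\<in>{c. g c \<noteq> (\<lambda>x. 0)}. snd (restrict_rep G (Vspan c)) a (g c) x)"
  proof
    fix x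
    have "(\<Sum>c\<in>N. snd (restrict_rep G (Vspan c)) a (g c) x) = (\<Sum>c\<in>N. mr c (evalop G a f) x)"
    proof (rule sum.cong)
      fix c assume c: "c \<in> N"
      have "snd (restrict_rep G (Vspan c)) a (g c) = evalop G a (mr c f)"
        using snd_rr[OF a gV[OF c]] gc[OF c] by simp
      also have "\<dots> = mr c (evalop G a f)"
        using evalop_mr[OF wf sat_tclasses[OF wf] a] N(2) c by blast
      finally show "snd (restrict_rep G (Vspan c)) a (g c) x = mr c (evalop G a f) x" by simp
    qed simp
    also have "\<dots> = (if x \<in> bpaths G \<and> tclass G x \<in> N then mr (tclass G x) (evalop G a f) x else 0)"
      by (rule sum_at[OF N]) (auto simp: mr_def split: if_splits)
    also have "\<dots> = evalop G a f x"
    proof (cases "x \<in> bpaths G")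
      case True
      have xc: "x \<in> tclass G x" using self_tclass[OF True] .
      show ?thesis
      proof (cases "tclass G x \<in> N")
        case False
        then have "g (tclass G x) = (\<lambda>x. 0)" unfolding N_def by simp
        moreover have "tclass G x \<in> tclasses G" using True by (simp add: tclasses_def)
        ultimately have "mr (tclass G x) f = (\<lambda>x. 0)" using alg_decomp_unique[of G f g] fg by metis
        then have "evalop G a (mr (tclass G x) f) = (\<lambda>x. 0)" by (simp add: evalop_zero)
        then have "mr (tclass G x) (evalop G a f) = (\<lambda>x. 0)"
          using evalop_mr[OF wf sat_tclass[OF wf] a] by metis
        then have "evalop G a f x = 0" using xc by (metis mr_def)
        then show ?thesis using False by simp
      qed (use xc True in \<open>simp add: mr_def\<close>)
    next
      case False
      then show ?thesis by (simp add: evalop_outside)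
    qed
    finally show "snd (rho G) a f x = (\<Sum>c\<in>{c. g c \<noteq> (\<lambda>x. 0)}. snd (restrict_rep G (Vspan c)) a (g c) x)"
      using snd_rr[OF a, of f "Vspan (bpaths G)"] fg N_def by (simp add: rho_def)
  qed
qed

lemma alg_irred:
  fixes G :: "('v,'e) graph"
  assumes wf: "wf_graph G" and \<alpha>: "\<alpha> \<in> bpaths G"
  shows "irreducible_alg G (rho_cls G \<alpha> :: ('v,'e,'k::field) rep)"
  unfolding irreducible_alg_def
proof (intro allI impI)
  fix W :: "(_ \<Rightarrow> 'k) set"
  define C where "C = tclass G \<alpha>"
  assume W: "W \<subseteq> fst (rho_cls G \<alpha> :: ('v,'e,'k) rep) \<and> is_subspace W \<and> invariant G (rho_cls G \<alpha> :: ('v,'e,'k) rep) W"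
  have WC: "W \<subseteq> Vspan C" and sub: "is_subspace W" using W by (auto simp: rho_cls_def C_def)
  have inv: "evalop G a f \<in> W" if "wf_expr G a" "f \<in> W" for a f
  proof -
    have "snd (restrict_rep G (Vspan C)) a f \<in> W" using W that unfolding invariant_def rho_cls_def C_def by blast
    moreover have "snd (restrict_rep G (Vspan C)) a f = evalop G a f" using snd_rr[OF that(1)] WC that(2) by blast
    ultimately show ?thesis by simp
  qed
  have z: "(\<lambda>x. 0) \<in> W" using sub by (simp add: is_subspace_def)
  show "W = {\<lambda>x. 0} \<or> W = fst (rho_cls G \<alpha> :: ('v,'e,'k) rep)"
  proof (cases "W \<subseteq> {\<lambda>x. 0}")
    case True
    then show ?thesis using z by blast
  next
    case False
    then obtain f where f: "f \<in> W" "f \<noteq> (\<lambda>x. 0)" by blast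
    then obtain b where b: "f b \<noteq> 0" by auto
    have fV: "finite {x. f x \<noteq> 0}" "{x. f x \<noteq> 0} \<subseteq> C" using f(1) WC by (auto simp: Vspan_def)
    have bC: "b \<in> C" using fV b by blast
    have Cb: "C \<subseteq> bpaths G" unfolding C_def by (rule tclass_sub)
    obtain a A where a: "wf_expr G (a :: ('v,'e,'k) lexpr)" "\<forall>f. evalop G a f = mr A f" "b \<in> A"
        "A \<inter> ({x. f x \<noteq> 0} - {b}) = {}"
      using isolate[OF wf, of b "{x. f x \<noteq> 0} - {b}"] fV bC Cb by blast
    have "evalop G a f = (\<lambda>x. if x = b then f b else 0)"
      using a(2,3,4) by (auto simp: mr_def fun_eq_iff)
    then have "dl b \<in> W" using pick_delta[OF sub f(1) b] inv[OF a(1) f(1)] by simp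
    moreover have "tclass G b = C" using mem_tclass_iff[of b G \<alpha>] bC Cb \<alpha> C_def by blast
    ultimately have "\<forall>g\<in>C. dl g \<in> W" using orbit[OF wf inv] bC Cb by blast
    then have "Vspan C \<subseteq> W" using Vspan_sub[OF sub] by blast
    then show ?thesis using WC by (simp add: rho_cls_def C_def)
  qed
qed

lemma alg_equiv:
  fixes G :: "('v,'e) graph"
  assumes wf: "wf_graph G" and \<alpha>: "\<alpha> \<in> bpaths G" and \<beta>: "\<beta> \<in> bpaths G"
  shows "(alg_equivalent G (rho_cls G \<alpha> :: ('v,'e,'k::field) rep) (rho_cls G \<beta>)
           \<longleftrightarrow> (rho_cls G \<alpha> :: ('v,'e,'k) rep) = rho_cls G \<beta>) \<and>
        ((rho_cls G \<alpha> :: ('v,'e,'k) rep) = rho_cls G \<beta> \<longleftrightarrow> tclass G \<alpha> = tclass G \<beta>)"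
proof -
  have eq2: "(rho_cls G \<alpha> :: ('v,'e,'k) rep) = rho_cls G \<beta> \<longleftrightarrow> tclass G \<alpha> = tclass G \<beta>"
  proof
    assume "(rho_cls G \<alpha> :: ('v,'e,'k) rep) = rho_cls G \<beta>"
    then have "(Vspan (tclass G \<alpha>) :: (_ \<Rightarrow> 'k) set) = Vspan (tclass G \<beta>)"
      unfolding rho_cls_def by (metis fst_rr)
    then show "tclass G \<alpha> = tclass G \<beta>" by (rule Vspan_eq)
  qed (simp add: rho_cls_def)
  have eq1: "alg_equivalent G (rho_cls G \<alpha> :: ('v,'e,'k::field) rep) (rho_cls G \<beta>)
           \<longleftrightarrow> (rho_cls G \<alpha> :: ('v,'e,'k) rep) = rho_cls G \<beta>"
  proof
    assume eqv: "alg_equivalent G (rho_cls G \<alpha> :: ('v,'e,'k::field) rep) (rho_cls G \<beta>)"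
    show "(rho_cls G \<alpha> :: ('v,'e,'k) rep) = rho_cls G \<beta>"
    proof (rule ccontr)
      assume ne: "(rho_cls G \<alpha> :: ('v,'e,'k) rep) \<noteq> rho_cls G \<beta>"
      then have "tclass G \<alpha> \<noteq> tclass G \<beta>" using eq2 by simp
      then have na: "\<alpha> \<notin> tclass G \<beta>" using mem_tclass_iff[OF \<alpha> \<beta>] by simp
      define V1 :: "(_ \<Rightarrow> 'k) set" where "V1 = Vspan (tclass G \<alpha>)"
      define V2 :: "(_ \<Rightarrow> 'k) set" where "V2 = Vspan (tclass G \<beta>)"
      obtain T where T: "bij_betw T V1 V2" "lin_on V1 T"
        "\<forall>a. wf_expr G a \<longrightarrow> (\<forall>f\<in>V1. snd (rho_cls G \<alpha> :: ('v,'e,'k) rep) a f = inv_into V1 T (snd (rho_cls G \<beta> :: ('v,'e,'k) rep) a (T f)))"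
        using eqv unfolding alg_equivalent_def V1_def V2_def rho_cls_def fst_rr by blast
      show False
      proof (rule not_equiv[OF wf \<alpha> T(1,2)])
        show "(\<lambda>x. 0) \<in> V1" by (simp add: V1_def Vspan_def)
        show "dl \<alpha> \<in> V1" using dl_Vspan self_tclass[OF \<alpha>] V1_def by blast
        show "x \<in> bpaths G \<and> x \<noteq> \<alpha>" if "g \<in> V2" "g x \<noteq> 0" for g x
          using that na tclass_sub[of G \<beta>] by (auto simp: V2_def Vspan_def)
        show "evalop G a g \<in> V2" if "wf_expr G a" "g \<in> V2" for a g
          using Vspan_inv[OF wf sat_tclass[OF wf] that(1)] that(2) V2_def by blast
        show "evalop G a f = inv_into V1 T (evalop G a (T f))" if "wf_expr G a" "f \<in> V1" for a f
        proof -
          have "T f \<in> V2" using T(1) that(2) by (auto simp: bij_betw_def)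
          then show ?thesis using T(3) that snd_rr[OF that(1), of f V1] snd_rr[OF that(1), of "T f" V2]
            unfolding rho_cls_def V1_def V2_def by simp
        qed
      qed
    qed
  next
    assume eq: "(rho_cls G \<alpha> :: ('v,'e,'k) rep) = rho_cls G \<beta>"
    define V1 :: "(_ \<Rightarrow> 'k) set" where "V1 = Vspan (tclass G \<alpha>)"
    have "bij_betw id V1 V1" by simp
    moreover have "lin_on V1 id" by (simp add: lin_on_def)
    moreover have "\<forall>a. wf_expr G a \<longrightarrow> (\<forall>f\<in>V1. snd (rho_cls G \<alpha> :: ('v,'e,'k) rep) a f = inv_into V1 id (snd (rho_cls G \<alpha> :: ('v,'e,'k) rep) a (id f)))"
    proof (intro allI impI ballI)
      fix a :: "('v,'e,'k) lexpr" and f assume a: "wf_expr G a" and f: "f \<in> V1"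
      have "snd (rho_cls G \<alpha> :: ('v,'e,'k) rep) a f = evalop G a f"
        using snd_rr[OF a f[unfolded V1_def]] by (simp add: rho_cls_def)
      moreover have "evalop G a f \<in> V1" using Vspan_inv[OF wf sat_tclass[OF wf] a] f V1_def by blast
      ultimately show "snd (rho_cls G \<alpha> :: ('v,'e,'k) rep) a f = inv_into V1 id (snd (rho_cls G \<alpha> :: ('v,'e,'k) rep) a (id f))"
        by (simp add: inv_into_f_f)
    qed
    ultimately have "alg_equivalent G (rho_cls G \<alpha> :: ('v,'e,'k::field) rep) (rho_cls G \<alpha>)"
      unfolding alg_equivalent_def V1_def rho_cls_def fst_rr by blast
    then show "alg_equivalent G (rho_cls G \<alpha> :: ('v,'e,'k::field) rep) (rho_cls G \<beta>)" using eq by simp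
  qed
  show ?thesis using eq1 eq2 by blast
qed


section \<open>l2 material\<close>

definition sqs :: "(('v,'e) path \<Rightarrow> complex) \<Rightarrow> bool" where
  "sqs f \<longleftrightarrow> (\<lambda>x. (cmod (f x))\<^sup>2) summable_on UNIV"

lemma ell2_iff: "f \<in> ell2 X \<longleftrightarrow> (\<forall>x. x \<notin> X \<longrightarrow> f x = 0) \<and> sqs f"
  by (simp add: ell2_def sqs_def)

lemma sqs_le:
  assumes "sqs f" "\<And>x. cmod (g x) \<le> cmod (f x)" shows "sqs g"
  unfolding sqs_def
  by (rule summable_on_comparison_test[OF assms(1)[unfolded sqs_def]])
     (use assms(2) in \<open>auto intro: power_mono\<close>)

lemma sqs_add:
  assumes "sqs f" "sqs g" shows "sqs (\<lambda>x. f x + g x)"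
proof -
  have "(\<lambda>x. 2 * (cmod (f x))\<^sup>2 + 2 * (cmod (g x))\<^sup>2) summable_on UNIV"
    using assms unfolding sqs_def by (intro summable_on_add summable_on_cmult_right)
  moreover have "(cmod (f x + g x))\<^sup>2 \<le> 2 * (cmod (f x))\<^sup>2 + 2 * (cmod (g x))\<^sup>2" for x
  proof -
    have "cmod (f x + g x) \<le> cmod (f x) + cmod (g x)" by (rule norm_triangle_ineq)
    then have "(cmod (f x + g x))\<^sup>2 \<le> (cmod (f x) + cmod (g x))\<^sup>2" by (simp add: power_mono)
    also have "\<dots> \<le> 2 * (cmod (f x))\<^sup>2 + 2 * (cmod (g x))\<^sup>2"
    proof -
      have h: "0 \<le> (cmod (f x) - cmod (g x))\<^sup>2" by simp
      have "(cmod (f x) + cmod (g x))\<^sup>2 = 2 * (cmod (f x))\<^sup>2 + 2 * (cmod (g x))\<^sup>2 - (cmod (f x) - cmod (g x))\<^sup>2"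
        by (simp add: power2_eq_square algebra_simps)
      then show ?thesis using h by linarith
    qed
    finally show ?thesis .
  qed
  ultimately show ?thesis unfolding sqs_def
    by (rule summable_on_comparison_test) auto
qed

lemma sqs_scal: "sqs f \<Longrightarrow> sqs (\<lambda>x. c * f x)"
  unfolding sqs_def by (simp add: norm_mult power_mult_distrib summable_on_cmult_right)

lemma sqs_diff: "sqs f \<Longrightarrow> sqs g \<Longrightarrow> sqs (\<lambda>x. f x - g x)"
  using sqs_add[of f "\<lambda>x. (-1) * g x"] sqs_scal[of g "-1"] by simp

lemma sqs_sum: "finite F \<Longrightarrow> (\<forall>c\<in>F. sqs (g c)) \<Longrightarrow> sqs (\<lambda>x. \<Sum>c\<in>F. g c x)"
proof (induction F rule: finite_induct)
  case empty
  then show ?case by (simp add: sqs_def)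
next
  case (insert c F)
  then show ?case using sqs_add[of "g c" "\<lambda>x. \<Sum>c\<in>F. g c x"] by simp
qed

lemma sqs_finite:
  assumes "finite {x. f x \<noteq> 0}" shows "sqs f"
proof -
  have "(\<lambda>x. (cmod (f x))\<^sup>2) summable_on {x. f x \<noteq> 0}" using assms by simp
  then show ?thesis unfolding sqs_def
    by (rule summable_on_cong_neutral[THEN iffD1, rotated -1]) auto
qed

lemma sqs_reindex:
  assumes "sqs f" "inj_on h D" "\<And>x. x \<notin> D \<Longrightarrow> g x = 0" "\<And>x. x \<in> D \<Longrightarrow> g x = f (h x)"
  shows "sqs g"
proof -
  have "(\<lambda>x. (cmod (f x))\<^sup>2) summable_on h ` D"
    using assms(1) unfolding sqs_def by (rule summable_on_subset_banach) simp
  then have "((\<lambda>x. (cmod (f x))\<^sup>2) \<circ> h) summable_on D" using summable_on_reindex[OF assms(2)] by blast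
  then have "(\<lambda>x. (cmod (g x))\<^sup>2) summable_on D"
    by (rule summable_on_cong[THEN iffD1, rotated]) (simp add: assms(4))
  then show ?thesis unfolding sqs_def
    by (rule summable_on_cong_neutral[THEN iffD1, rotated -1]) (auto simp: assms(3))
qed

lemma sqs_evalop:
  assumes wf: "wf_graph G"
  shows "sqs f \<Longrightarrow> sqs (evalop G a f)"
proof (induction a arbitrary: f)
  case (LP v)
  then show ?case by (rule sqs_le) (simp add: opP_def)
next
  case (LS e)
  show ?case
  proof (rule sqs_reindex[OF LS, of "shift G" "{x. x \<in> bpaths G \<and> first_edge x = Some e}"])
    show "inj_on (shift G) {x \<in> bpaths G. first_edge x = Some e}"
      by (rule inj_onI) (metis (mono_tags, lifting) bp_fe_edge mem_Collect_eq)
  qed (auto simp: opS_def)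
next
  case (LSs e)
  show ?case
  proof (rule sqs_reindex[OF LSs, of "cons_edge G e" "{x. x \<in> bpaths G \<and> psrc G x = rng G e}"])
    have "shift G (cons_edge G e x) = x" if "psrc G x = rng G e" for x using that by (cases x) auto
    then show "inj_on (cons_edge G e) {x \<in> bpaths G. psrc G x = rng G e}"
      by (rule inj_on_inverseI[where g = "shift G"]) auto
  qed (auto simp: opSs_def)
next
  case LZero
  then show ?case by (simp add: sqs_def)
next
  case (LScal c a)
  have "sqs (evalop G a f)" using LScal by blast
  then show ?case by (simp add: sqs_scal)
next
  case (LAdd a b)
  have "sqs (evalop G a f)" "sqs (evalop G b f)" using LAdd by blast+
  then show ?case by (simp add: sqs_add)
next
  case (LMul a b)
  then show ?case by simp
qed

lemma ell2_inv:
  assumes "wf_graph G" "sat G X" "wf_expr G a" "f \<in> ell2 X"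
  shows "evalop G a f \<in> ell2 X"
proof -
  have f: "\<forall>x. x \<notin> X \<longrightarrow> f x = 0" "sqs f" using assms(4) by (auto simp: ell2_iff)
  have "mr X f = f" using f(1) by (auto simp: mr_def fun_eq_iff)
  then have "evalop G a f = evalop G a (mr X f)" by simp
  also have "\<dots> = mr X (evalop G a f)" by (rule evalop_mr[OF assms(1,2,3)])
  finally have eq: "evalop G a f = mr X (evalop G a f)" .
  have "evalop G a f x = 0" if "x \<notin> X" for x
    using fun_cong[OF eq, of x] that by (simp add: mr_def)
  then show ?thesis using sqs_evalop[OF assms(1) f(2)] by (simp add: ell2_iff)
qed

lemma l2norm_nonneg: "0 \<le> l2norm f"
  unfolding l2norm_def by (simp add: infsum_nonneg)

lemma pointwise_le:
  assumes "sqs f" shows "cmod (f x) \<le> l2norm f"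
proof -
  have "infsum (\<lambda>x. (cmod (f x))\<^sup>2) {x} \<le> infsum (\<lambda>x. (cmod (f x))\<^sup>2) UNIV"
    by (rule infsum_mono2) (use assms in \<open>auto simp: sqs_def\<close>)
  then have "(cmod (f x))\<^sup>2 \<le> infsum (\<lambda>x. (cmod (f x))\<^sup>2) UNIV" by simp
  then have "sqrt ((cmod (f x))\<^sup>2) \<le> l2norm f" unfolding l2norm_def using real_sqrt_le_mono by blast
  then show ?thesis by simp
qed

definition tail :: "(('v,'e) path \<Rightarrow> complex) \<Rightarrow> ('v,'e) path set \<Rightarrow> real" where
  "tail f F = infsum (\<lambda>x. (cmod (f x))\<^sup>2) (- F)"

lemma tail_small:
  assumes "sqs f" "\<epsilon> > 0" shows "\<exists>F. finite F \<and> tail f F < \<epsilon>"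
proof -
  let ?g = "\<lambda>x. (cmod (f x))\<^sup>2"
  obtain F where F: "finite F" "dist (sum ?g F) (infsum ?g UNIV) \<le> \<epsilon>/2"
    using infsum_finite_approximation[of ?g UNIV "\<epsilon>/2"] assms unfolding sqs_def by auto
  have s1: "?g summable_on F" using F(1) by simp
  have s2: "?g summable_on (-F)" using assms(1) unfolding sqs_def by (rule summable_on_subset_banach) simp
  have "infsum ?g UNIV = infsum ?g (F \<union> -F)" by simp
  also have "\<dots> = infsum ?g F + infsum ?g (-F)" by (rule infsum_Un_disjoint[OF s1 s2]) auto
  finally have "tail f F = infsum ?g UNIV - sum ?g F" using F(1) by (simp add: tail_def)
  moreover have "\<bar>sum ?g F - infsum ?g UNIV\<bar> \<le> \<epsilon>/2" using F(2) by (simp add: dist_real_def)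
  ultimately have "tail f F \<le> \<epsilon>/2" by linarith
  then show ?thesis using F(1) assms(2) by (intro exI[of _ F]) simp
qed

lemma tail_bound:
  assumes "sqs f" "\<And>x. x \<in> F \<Longrightarrow> d x = 0" "\<And>x. cmod (d x) \<le> cmod (f x)"
  shows "l2norm d \<le> sqrt (tail f F)"
proof -
  have sd: "sqs d" using sqs_le[OF assms(1)] assms(3) by blast
  have "infsum (\<lambda>x. (cmod (d x))\<^sup>2) UNIV \<le> infsum (\<lambda>x. (cmod (f x))\<^sup>2) (-F)"
  proof (rule infsum_mono_neutral)
    show "(\<lambda>x. (cmod (d x))\<^sup>2) summable_on UNIV" using sd by (simp add: sqs_def)
    show "(\<lambda>x. (cmod (f x))\<^sup>2) summable_on (-F)" using assms(1) unfolding sqs_def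
      by (rule summable_on_subset_banach) simp
  qed (use assms(2,3) in \<open>auto intro: power_mono\<close>)
  then show ?thesis unfolding l2norm_def tail_def using real_sqrt_le_mono by blast
qed

lemma approx_seq:
  assumes "sqs f"
  shows "\<exists>Fs. (\<forall>n. finite (Fs n)) \<and> (\<forall>d. (\<forall>n x. x \<in> Fs n \<longrightarrow> d n x = 0) \<and> (\<forall>n x. cmod (d n x) \<le> cmod (f x))
          \<longrightarrow> (\<lambda>n. l2norm (d n)) \<longlonglongrightarrow> 0)"
proof -
  have "\<forall>n. \<exists>F. finite F \<and> tail f F < (inverse (real (Suc n)))\<^sup>2"
    using tail_small[OF assms] by simp
  then obtain Fs where Fs: "\<And>n. finite (Fs n)" "\<And>n. tail f (Fs n) < (inverse (real (Suc n)))\<^sup>2"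
    by metis
  show ?thesis
  proof (intro exI[of _ Fs] conjI allI impI)
    show "finite (Fs n)" for n using Fs(1) .
  next
    fix d :: "nat \<Rightarrow> _"
    assume d: "(\<forall>n x. x \<in> Fs n \<longrightarrow> d n x = 0) \<and> (\<forall>n x. cmod (d n x) \<le> cmod (f x))"
    have b: "l2norm (d n) < inverse (real (Suc n))" for n
    proof -
      have "l2norm (d n) \<le> sqrt (tail f (Fs n))" using tail_bound[OF assms, of "Fs n" "d n"] d by blast
      also have "\<dots> < sqrt ((inverse (real (Suc n)))\<^sup>2)" using Fs(2)[of n] real_sqrt_less_mono by blast
      also have "\<dots> = inverse (real (Suc n))" by simp
      finally show ?thesis .
    qed
    show "(\<lambda>n. l2norm (d n)) \<longlonglongrightarrow> 0"
    proof (rule LIMSEQ_I)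
      fix r :: real assume r: "0 < r"
      obtain no where no: "inverse (real (Suc no)) < r" using reals_Archimedean[OF r] by blast
      show "\<exists>no. \<forall>n\<ge>no. norm (l2norm (d n) - 0) < r"
      proof (intro exI[of _ no] allI impI)
        fix n assume "no \<le> n"
        then have iv: "inverse (real (Suc n)) \<le> inverse (real (Suc no))"
          by (simp add: le_imp_inverse_le)
        have "l2norm (d n) < r" using b[of n] no iv by linarith
        then show "norm (l2norm (d n) - 0) < r" using l2norm_nonneg[of "d n"] by simp
      qed
    qed
  qed
qed

lemma ell2_closed: "l2closed (ell2 X)"
  unfolding l2closed_def
proof (intro allI impI)
  fix u :: "nat \<Rightarrow> _" and f
  assume a: "(\<forall>n. u n \<in> ell2 X) \<and> f \<in> ell2 UNIV \<and> (\<lambda>n. l2norm (\<lambda>x. u n x - f x)) \<longlonglongrightarrow> 0"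
  have sf: "sqs f" using a by (simp add: ell2_iff)
  have "f x = 0" if x: "x \<notin> X" for x
  proof -
    have "cmod (f x) \<le> l2norm (\<lambda>y. u n y - f y)" for n
    proof -
      have "sqs (u n)" "u n x = 0" using a x by (auto simp: ell2_iff)
      then show ?thesis using pointwise_le[OF sqs_diff[OF \<open>sqs (u n)\<close> sf], of x] by simp
    qed
    then have "cmod (f x) \<le> 0" using a by (intro LIMSEQ_le_const[of _ 0]) auto
    then show ?thesis by simp
  qed
  then show "f \<in> ell2 X" using sf by (simp add: ell2_iff)
qed


lemma dl_ell2: "(dl b :: _ \<Rightarrow> complex) \<in> ell2 X \<longleftrightarrow> b \<in> X"
proof -
  have "{y. (dl b :: _ \<Rightarrow> complex) y \<noteq> 0} = {b}" by (auto simp: dl_def)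
  then have "sqs (dl b :: _ \<Rightarrow> complex)" by (intro sqs_finite) simp
  then show ?thesis by (auto simp: ell2_iff dl_def)
qed

lemma ell2_eq: "ell2 X = ell2 Y \<Longrightarrow> X = Y"
  using dl_ell2 by blast

lemma hil_irred:
  fixes G :: "('v,'e) graph"
  assumes wf: "wf_graph G" and \<alpha>: "\<alpha> \<in> bpaths G"
  shows "irreducible_hil G (pi_cls G \<alpha>)"
  unfolding irreducible_hil_def
proof (intro allI impI)
  fix W :: "(_ \<Rightarrow> complex) set"
  define C where "C = tclass G \<alpha>"
  assume W: "W \<subseteq> fst (pi_cls G \<alpha>) \<and> is_subspace W \<and> l2closed W \<and> invariant G (pi_cls G \<alpha>) W"
  have WC: "W \<subseteq> ell2 C" and sub: "is_subspace W" and cl: "l2closed W" using W by (auto simp: pi_cls_def C_def)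
  have inv: "evalop G a f \<in> W" if "wf_expr G a" "f \<in> W" for a f
  proof -
    have "snd (restrict_rep G (ell2 C)) a f \<in> W" using W that unfolding invariant_def pi_cls_def C_def by blast
    moreover have "snd (restrict_rep G (ell2 C)) a f = evalop G a f" using snd_rr[OF that(1)] WC that(2) by blast
    ultimately show ?thesis by simp
  qed
  have z: "(\<lambda>x. 0) \<in> W" using sub by (simp add: is_subspace_def)
  have Cb: "C \<subseteq> bpaths G" unfolding C_def by (rule tclass_sub)
  have clD: "t \<in> W" if "\<And>n. u n \<in> W" "t \<in> ell2 UNIV" "(\<lambda>n. l2norm (\<lambda>x. u n x - t x)) \<longlonglongrightarrow> 0" for u t
    using cl that unfolding l2closed_def by blast
  show "W = {\<lambda>x. 0} \<or> W = fst (pi_cls G \<alpha>)"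
  proof (cases "W \<subseteq> {\<lambda>x. 0}")
    case True
    then show ?thesis using z by blast
  next
    case False
    then obtain f where f: "f \<in> W" "f \<noteq> (\<lambda>x. 0)" by blast
    then obtain b where b: "f b \<noteq> 0" by auto
    have fC: "\<And>x. x \<notin> C \<Longrightarrow> f x = 0" and sf: "sqs f" using f(1) WC by (auto simp: ell2_iff)
    have bC: "b \<in> C" using fC b by blast
    obtain Fs where Fs: "\<And>n. finite (Fs n)"
      "\<And>d. (\<forall>n x. x \<in> Fs n \<longrightarrow> d n x = 0) \<and> (\<forall>n x. cmod (d n x) \<le> cmod (f x)) \<Longrightarrow> (\<lambda>n. l2norm (d n)) \<longlonglongrightarrow> 0"
      using approx_seq[OF sf] by blast
    define S where "S n = (Fs n \<inter> {x. f x \<noteq> 0}) - {b}" for n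
    have "\<forall>n. \<exists>(a::('v,'e,complex) lexpr) A. wf_expr G a \<and> (\<forall>f. evalop G a f = mr A f) \<and> b \<in> A \<and> A \<inter> S n = {}"
    proof
      fix n
      have "finite (S n)" using Fs(1)[of n] by (simp add: S_def)
      moreover have "S n \<subseteq> bpaths G" using fC Cb by (auto simp: S_def)
      moreover have "b \<notin> S n" by (simp add: S_def)
      ultimately show "\<exists>(a::('v,'e,complex) lexpr) A. wf_expr G a \<and> (\<forall>f. evalop G a f = mr A f) \<and> b \<in> A \<and> A \<inter> S n = {}"
        using isolate[OF wf, of b "S n"] bC Cb by blast
    qed
    then obtain as As where aA: "\<And>n. wf_expr G (as n :: ('v,'e,complex) lexpr)" "\<And>n f. evalop G (as n) f = mr (As n) f"
      "\<And>n. b \<in> As n" "\<And>n. As n \<inter> S n = {}"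
      by metis
    define t where "t = (\<lambda>x. if x = b then f b else 0)"
    have uW: "mr (As n) f \<in> W" for n using inv[OF aA(1) f(1)] aA(2) by metis
    have "t \<in> W"
    proof (rule clD[OF uW])
      have "finite {x. t x \<noteq> 0}" by (simp add: t_def)
      then show "t \<in> ell2 UNIV" using sqs_finite by (simp add: ell2_iff)
      show "(\<lambda>n. l2norm (\<lambda>x. mr (As n) f x - t x)) \<longlonglongrightarrow> 0"
      proof (rule Fs(2)[of "\<lambda>n x. mr (As n) f x - t x"], intro conjI allI impI)
        fix n x assume "x \<in> Fs n"
        then show "mr (As n) f x - t x = 0" using aA(3,4)[of n] by (auto simp: mr_def t_def S_def)
      next
        fix n x show "cmod (mr (As n) f x - t x) \<le> cmod (f x)"
          using aA(3)[of n] by (auto simp: mr_def t_def)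
      qed
    qed
    then have "dl b \<in> W" using pick_delta[OF sub f(1) b] t_def by simp
    moreover have "tclass G b = C" using mem_tclass_iff[of b G \<alpha>] bC Cb \<alpha> C_def by blast
    ultimately have "\<forall>g\<in>C. dl g \<in> W" using orbit[OF wf inv] bC Cb by blast
    then have VW: "Vspan C \<subseteq> W" using Vspan_sub[OF sub] by blast
    have "ell2 C \<subseteq> W"
    proof
      fix g assume g: "g \<in> ell2 C"
      then have gC: "\<And>x. x \<notin> C \<Longrightarrow> g x = 0" and sg: "sqs g" by (auto simp: ell2_iff)
      obtain Fs' where Fs': "\<And>n. finite (Fs' n)"
        "\<And>d. (\<forall>n x. x \<in> Fs' n \<longrightarrow> d n x = 0) \<and> (\<forall>n x. cmod (d n x) \<le> cmod (g x)) \<Longrightarrow> (\<lambda>n. l2norm (d n)) \<longlonglongrightarrow> 0"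
        using approx_seq[OF sg] by blast
      have uW: "mr (Fs' n) g \<in> W" for n
      proof -
        have "{x. mr (Fs' n) g x \<noteq> 0} \<subseteq> Fs' n" by (auto simp: mr_def)
        then have "finite {x. mr (Fs' n) g x \<noteq> 0}" using Fs'(1) finite_subset by blast
        moreover have "{x. mr (Fs' n) g x \<noteq> 0} \<subseteq> C" using gC by (auto simp: mr_def)
        ultimately show ?thesis using VW by (auto simp: Vspan_def)
      qed
      show "g \<in> W"
      proof (rule clD[OF uW])
        show "g \<in> ell2 UNIV" using sg by (simp add: ell2_iff)
        show "(\<lambda>n. l2norm (\<lambda>x. mr (Fs' n) g x - g x)) \<longlonglongrightarrow> 0"
          by (rule Fs'(2)) (auto simp: mr_def)
      qed
    qed
    then show ?thesis using WC by (simp add: pi_cls_def C_def)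
  qed
qed


lemma hil_equiv:
  fixes G :: "('v,'e) graph"
  assumes wf: "wf_graph G" and \<alpha>: "\<alpha> \<in> bpaths G" and \<beta>: "\<beta> \<in> bpaths G"
  shows "(unitarily_equivalent G (pi_cls G \<alpha>) (pi_cls G \<beta>) \<longleftrightarrow> pi_cls G \<alpha> = pi_cls G \<beta>) \<and>
        (pi_cls G \<alpha> = pi_cls G \<beta> \<longleftrightarrow> tclass G \<alpha> = tclass G \<beta>)"
proof -
  have eq2: "pi_cls G \<alpha> = pi_cls G \<beta> \<longleftrightarrow> tclass G \<alpha> = tclass G \<beta>"
  proof
    assume "pi_cls G \<alpha> = pi_cls G \<beta>"
    then have "ell2 (tclass G \<alpha>) = ell2 (tclass G \<beta>)"
      unfolding pi_cls_def by (metis fst_rr)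
    then show "tclass G \<alpha> = tclass G \<beta>" by (rule ell2_eq)
  qed (simp add: pi_cls_def)
  have eq1: "unitarily_equivalent G (pi_cls G \<alpha>) (pi_cls G \<beta>) \<longleftrightarrow> pi_cls G \<alpha> = pi_cls G \<beta>"
  proof
    assume eqv: "unitarily_equivalent G (pi_cls G \<alpha>) (pi_cls G \<beta>)"
    show "pi_cls G \<alpha> = pi_cls G \<beta>"
    proof (rule ccontr)
      assume ne: "pi_cls G \<alpha> \<noteq> pi_cls G \<beta>"
      then have "tclass G \<alpha> \<noteq> tclass G \<beta>" using eq2 by simp
      then have na: "\<alpha> \<notin> tclass G \<beta>" using mem_tclass_iff[OF \<alpha> \<beta>] by simp
      define V1 where "V1 = ell2 (tclass G \<alpha>)"
      define V2 where "V2 = ell2 (tclass G \<beta>)"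
      obtain T where T: "bij_betw T V1 V2" "lin_on V1 T"
        "\<forall>a. wf_expr G a \<longrightarrow> (\<forall>f\<in>V1. snd (pi_cls G \<alpha>) a f = inv_into V1 T (snd (pi_cls G \<beta>) a (T f)))"
        using eqv unfolding unitarily_equivalent_def V1_def V2_def pi_cls_def fst_rr by blast
      show False
      proof (rule not_equiv[OF wf \<alpha> T(1,2)])
        show "(\<lambda>x. 0) \<in> V1" by (simp add: V1_def ell2_iff sqs_def)
        show "dl \<alpha> \<in> V1" using dl_ell2 self_tclass[OF \<alpha>] V1_def by blast
        show "x \<in> bpaths G \<and> x \<noteq> \<alpha>" if "g \<in> V2" "g x \<noteq> 0" for g x
          using that na tclass_sub[of G \<beta>] by (auto simp: V2_def ell2_iff)
        show "evalop G a g \<in> V2" if "wf_expr G a" "g \<in> V2" for a g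
          using ell2_inv[OF wf sat_tclass[OF wf] that(1)] that(2) V2_def by blast
        show "evalop G a f = inv_into V1 T (evalop G a (T f))" if "wf_expr G a" "f \<in> V1" for a f
        proof -
          have "T f \<in> V2" using T(1) that(2) by (auto simp: bij_betw_def)
          then show ?thesis using T(3) that snd_rr[OF that(1), of f V1] snd_rr[OF that(1), of "T f" V2]
            unfolding pi_cls_def V1_def V2_def by simp
        qed
      qed
    qed
  next
    assume eq: "pi_cls G \<alpha> = pi_cls G \<beta>"
    define V1 where "V1 = ell2 (tclass G \<alpha>)"
    have "bij_betw id V1 V1" by simp
    moreover have "lin_on V1 id" by (simp add: lin_on_def)
    moreover have "\<forall>f\<in>V1. \<forall>g\<in>V1. l2inner (id f) (id g) = l2inner f g" by simp
    moreover have "\<forall>a. wf_expr G a \<longrightarrow> (\<forall>f\<in>V1. snd (pi_cls G \<alpha>) a f = inv_into V1 id (snd (pi_cls G \<alpha>) a (id f)))"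
    proof (intro allI impI ballI)
      fix a :: "('v,'e,complex) lexpr" and f assume a: "wf_expr G a" and f: "f \<in> V1"
      have "snd (pi_cls G \<alpha>) a f = evalop G a f"
        using snd_rr[OF a f[unfolded V1_def]] by (simp add: pi_cls_def)
      moreover have "evalop G a f \<in> V1" using ell2_inv[OF wf sat_tclass[OF wf] a] f V1_def by blast
      ultimately show "snd (pi_cls G \<alpha>) a f = inv_into V1 id (snd (pi_cls G \<alpha>) a (id f))"
        by simp
    qed
    ultimately have "unitarily_equivalent G (pi_cls G \<alpha>) (pi_cls G \<alpha>)"
      unfolding unitarily_equivalent_def V1_def pi_cls_def fst_rr by blast
    then show "unitarily_equivalent G (pi_cls G \<alpha>) (pi_cls G \<beta>)" using eq by simp
  qed
  show ?thesis using eq1 eq2 by blast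
qed

lemma hsum_classes:
  fixes G :: "('v,'e) graph"
  assumes f: "f \<in> ell2 (bpaths G)"
  shows "l2_has_sum (\<lambda>c. mr c f) (tclasses G) f"
  unfolding l2_has_sum_def
proof (intro allI impI)
  fix \<epsilon> :: real assume e: "\<epsilon> > 0"
  have fb: "\<And>x. x \<notin> bpaths G \<Longrightarrow> f x = 0" and sf: "sqs f" using f by (auto simp: ell2_iff)
  obtain Fp where Fp: "finite Fp" "tail f Fp < \<epsilon>\<^sup>2" using tail_small[OF sf, of "\<epsilon>\<^sup>2"] e by auto
  define F0 where "F0 = tclass G ` (Fp \<inter> bpaths G)"
  have F0: "finite F0" "F0 \<subseteq> tclasses G" using Fp(1) by (auto simp: F0_def tclasses_def)
  have "\<forall>F. finite F \<and> F0 \<subseteq> F \<and> F \<subseteq> tclasses G \<longrightarrow> l2norm (\<lambda>x. f x - (\<Sum>c\<in>F. mr c f x)) < \<epsilon>"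
  proof (intro allI impI)
    fix F assume F: "finite F \<and> F0 \<subseteq> F \<and> F \<subseteq> tclasses G"
    define d where "d = (\<lambda>x. f x - (\<Sum>c\<in>F. mr c f x))"
    have dx: "d x = (if x \<in> bpaths G \<and> tclass G x \<in> F then 0 else f x)" for x
    proof -
      have "(\<Sum>c\<in>F. mr c f x) = (if x \<in> bpaths G \<and> tclass G x \<in> F then mr (tclass G x) f x else 0)"
        by (rule sum_at) (use F in \<open>auto simp: mr_def split: if_splits\<close>)
      then show ?thesis using self_tclass[of x G] by (auto simp: d_def mr_def)
    qed
    have "l2norm d \<le> sqrt (tail f Fp)"
    proof (rule tail_bound[OF sf])
      fix x assume x: "x \<in> Fp"
      show "d x = 0"
      proof (cases "x \<in> bpaths G")
        case True
        then have "tclass G x \<in> F" using x F unfolding F0_def by blast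
        then show ?thesis using True dx by simp
      qed (simp add: dx fb)
    qed (simp add: dx)
    also have "\<dots> < sqrt (\<epsilon>\<^sup>2)" using Fp(2) real_sqrt_less_mono by blast
    also have "\<dots> = \<epsilon>" using e by simp
    finally show "l2norm (\<lambda>x. f x - (\<Sum>c\<in>F. mr c f x)) < \<epsilon>" by (simp add: d_def)
  qed
  then show "\<exists>F0. finite F0 \<and> F0 \<subseteq> tclasses G \<and>
      (\<forall>F. finite F \<and> F0 \<subseteq> F \<and> F \<subseteq> tclasses G \<longrightarrow> l2norm (\<lambda>x. f x - (\<Sum>c\<in>F. mr c f x)) < \<epsilon>)"
    using F0 by blast
qed

lemma hil_dsum:
  fixes G :: "('v,'e) graph"
  assumes wf: "wf_graph G"
  shows "hil_direct_sum G"
  unfolding hil_direct_sum_def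
proof (intro conjI ballI impI)
  fix c assume c: "c \<in> tclasses G"
  show "ell2 c \<subseteq> ell2 (bpaths G)" unfolding ell2_def using tclasses_sub[OF c] by blast
  show "l2closed (ell2 c)" by (rule ell2_closed)
next
  fix c d f g assume c: "c \<in> tclasses G" and d: "d \<in> tclasses G" and ne: "c \<noteq> d"
    and f: "f \<in> ell2 c" and g: "g \<in> ell2 d"
  have "cnj (f x) * g x = 0" for x
  proof (cases "x \<in> c \<and> x \<in> d")
    case True
    then have "c = d" using tclasses_mem_iff[OF c] tclasses_mem_iff[OF d] tclasses_sub[OF c] by blast
    then show ?thesis using ne by simp
  next
    case False
    then show ?thesis using f g by (auto simp: ell2_iff)
  qed
  then have "(\<lambda>x. cnj (f x) * g x) = (\<lambda>x. 0)" by (rule ext)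
  then show "l2inner f g = 0" by (simp add: l2inner_def)
next
  fix f assume f: "f \<in> ell2 (bpaths G)"
  have "hil_decomp G f (\<lambda>c. mr c f)"
    unfolding hil_decomp_def
  proof (intro conjI ballI)
    fix c assume "c \<in> tclasses G"
    have sf: "sqs f" using f by (simp add: ell2_iff)
    have "sqs (mr c f)" by (rule sqs_le[OF sf]) (simp add: mr_def)
    then show "mr c f \<in> ell2 c" by (simp add: ell2_iff mr_def)
  next
    show "l2_has_sum (\<lambda>c. mr c f) (tclasses G) f" by (rule hsum_classes[OF f])
  qed
  then show "\<exists>g. hil_decomp G f g" by blast
qed

lemma hil_decomp_unique:
  fixes G :: "('v,'e) graph"
  assumes f: "f \<in> ell2 (bpaths G)" and hd: "hil_decomp G f g" and c0: "c0 \<in> tclasses G"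
  shows "g c0 = mr c0 f"
proof
  fix x
  have gc: "\<And>c. c \<in> tclasses G \<Longrightarrow> g c \<in> ell2 c" using hd by (simp add: hil_decomp_def)
  have hs: "l2_has_sum g (tclasses G) f" using hd by (simp add: hil_decomp_def)
  show "g c0 x = mr c0 f x"
  proof (cases "x \<in> c0")
    case False
    then show ?thesis using gc[OF c0] by (simp add: ell2_iff mr_def)
  next
    case True
    have xb: "x \<in> bpaths G" using tclasses_sub[OF c0] True by blast
    have ce: "c0 = tclass G x" using tclasses_mem_iff[OF c0 xb] True by simp
    show ?thesis
    proof (rule ccontr)
      assume ne: "g c0 x \<noteq> mr c0 f x"
      define \<epsilon> where "\<epsilon> = cmod (f x - g c0 x)"
      have e: "\<epsilon> > 0" using ne True by (simp add: \<epsilon>_def mr_def)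
      obtain F0 where F0: "finite F0" "F0 \<subseteq> tclasses G"
        "\<And>F. finite F \<and> F0 \<subseteq> F \<and> F \<subseteq> tclasses G \<Longrightarrow> l2norm (\<lambda>x. f x - (\<Sum>c\<in>F. g c x)) < \<epsilon>"
        using hs e unfolding l2_has_sum_def by meson
      define F where "F = insert c0 F0"
      have F: "finite F" "F0 \<subseteq> F" "F \<subseteq> tclasses G" using F0 c0 by (auto simp: F_def)
      define d where "d = (\<lambda>x. f x - (\<Sum>c\<in>F. g c x))"
      have "l2norm d < \<epsilon>" using F0(3)[of F] F by (simp add: d_def)
      moreover have "sqs d"
      proof -
        have "\<forall>c\<in>F. sqs (g c)" using gc F(3) by (auto simp: ell2_iff)
        then have "sqs (\<lambda>x. \<Sum>c\<in>F. g c x)" using sqs_sum F(1) by blast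
        moreover have "sqs f" using f by (simp add: ell2_iff)
        ultimately show ?thesis unfolding d_def using sqs_diff by blast
      qed
      moreover have "d x = f x - g c0 x"
      proof -
        have "(\<Sum>c\<in>F. g c x) = (if x \<in> bpaths G \<and> tclass G x \<in> F then g (tclass G x) x else 0)"
        proof (rule sum_at[OF F(1,3)])
          fix c y assume "c \<in> F" "g c y \<noteq> 0"
          then show "y \<in> c" using gc F(3) by (auto simp: ell2_iff)
        qed
        then show ?thesis using xb ce F_def by (simp add: d_def)
      qed
      ultimately show False using pointwise_le[of d x] \<epsilon>_def by simp
    qed
  qed
qed

lemma l2_has_sum_cong1:
  assumes eq: "\<And>c. c \<in> C \<Longrightarrow> g c = g' c" and h: "l2_has_sum g C f"
  shows "l2_has_sum g' C f"
  unfolding l2_has_sum_def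
proof (intro allI impI)
  fix \<epsilon> :: real assume e: "\<epsilon> > 0"
  obtain F0 where F0: "finite F0" "F0 \<subseteq> C"
    "\<And>F. finite F \<and> F0 \<subseteq> F \<and> F \<subseteq> C \<Longrightarrow> l2norm (\<lambda>x. f x - (\<Sum>c\<in>F. g c x)) < \<epsilon>"
    using h e unfolding l2_has_sum_def by meson
  show "\<exists>F0. finite F0 \<and> F0 \<subseteq> C \<and> (\<forall>F. finite F \<and> F0 \<subseteq> F \<and> F \<subseteq> C \<longrightarrow> l2norm (\<lambda>x. f x - (\<Sum>c\<in>F. g' c x)) < \<epsilon>)"
  proof (intro exI[of _ F0] conjI allI impI)
    fix F assume F: "finite F \<and> F0 \<subseteq> F \<and> F \<subseteq> C"
    have "(\<lambda>x. f x - (\<Sum>c\<in>F. g' c x)) = (\<lambda>x. f x - (\<Sum>c\<in>F. g c x))"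
    proof
      fix x
      have "(\<Sum>c\<in>F. g' c x) = (\<Sum>c\<in>F. g c x)" using eq F by (intro sum.cong) auto
      then show "f x - (\<Sum>c\<in>F. g' c x) = f x - (\<Sum>c\<in>F. g c x)" by simp
    qed
    then show "l2norm (\<lambda>x. f x - (\<Sum>c\<in>F. g' c x)) < \<epsilon>" using F0(3)[OF F] by simp
  qed (use F0 in auto)
qed

lemma hil_rsum:
  fixes G :: "('v,'e) graph"
  assumes wf: "wf_graph G"
  shows "hil_rep_direct_sum G"
  unfolding hil_rep_direct_sum_def
proof (intro allI impI)
  fix a :: "('v,'e,complex) lexpr" and f g
  assume a: "wf_expr G a" and fg: "f \<in> ell2 (bpaths G) \<and> hil_decomp G f g"
  have eqc: "snd (restrict_rep G (ell2 c)) a (g c) = mr c (evalop G a f)" if c: "c \<in> tclasses G" for c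
  proof -
    have "g c \<in> ell2 c" using fg c by (simp add: hil_decomp_def)
    then have "snd (restrict_rep G (ell2 c)) a (g c) = evalop G a (g c)" using snd_rr[OF a] by blast
    also have "\<dots> = evalop G a (mr c f)" using hil_decomp_unique[OF _ _ c, of f g] fg by simp
    also have "\<dots> = mr c (evalop G a f)" by (rule evalop_mr[OF wf sat_tclasses[OF wf c] a])
    finally show ?thesis .
  qed
  have snde: "snd (piE G) a f = evalop G a f" using snd_rr[OF a] fg by (simp add: piE_def)
  have ein: "evalop G a f \<in> ell2 (bpaths G)" using ell2_inv[OF wf sat_bp[OF wf] a] fg by blast
  have "l2_has_sum (\<lambda>c. mr c (evalop G a f)) (tclasses G) (evalop G a f)"
    by (rule hsum_classes[OF ein])
  then have "l2_has_sum (\<lambda>c. snd (restrict_rep G (ell2 c)) a (g c)) (tclasses G) (evalop G a f)"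
    by (rule l2_has_sum_cong1[rotated]) (simp add: eqc)
  then show "l2_has_sum (\<lambda>c. snd (restrict_rep G (ell2 c)) a (g c)) (tclasses G) (snd (piE G) a f)"
    using snde by simp
qed

theorem theorem3p14:
  fixes G :: "('v,'e) graph"
  assumes "wf_graph G"
  shows
   "((\<forall>\<alpha>\<in>bpaths G.
        invariant G (rho G :: ('v,'e,'k::field) rep) (Vspan (tclass G \<alpha>)) \<and>
        irreducible_alg G (rho_cls G \<alpha> :: ('v,'e,'k) rep)) \<and>
     alg_direct_sum G TYPE('k) \<and> alg_rep_direct_sum G TYPE('k) \<and>
     (\<forall>\<alpha>\<in>bpaths G. \<forall>\<beta>\<in>bpaths G.
        (alg_equivalent G (rho_cls G \<alpha> :: ('v,'e,'k) rep) (rho_cls G \<beta>)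
           \<longleftrightarrow> (rho_cls G \<alpha> :: ('v,'e,'k) rep) = rho_cls G \<beta>) \<and>
        ((rho_cls G \<alpha> :: ('v,'e,'k) rep) = rho_cls G \<beta> \<longleftrightarrow> tclass G \<alpha> = tclass G \<beta>)))
    \<and>
    ((\<forall>\<alpha>\<in>bpaths G.
        l2closed (ell2 (tclass G \<alpha>)) \<and>
        invariant G (piE G) (ell2 (tclass G \<alpha>)) \<and>
        irreducible_hil G (pi_cls G \<alpha>)) \<and>
     hil_direct_sum G \<and> hil_rep_direct_sum G \<and>
     (\<forall>\<alpha>\<in>bpaths G. \<forall>\<beta>\<in>bpaths G.
        (unitarily_equivalent G (pi_cls G \<alpha>) (pi_cls G \<beta>) \<longleftrightarrow> pi_cls G \<alpha> = pi_cls G \<beta>) \<and>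
        (pi_cls G \<alpha> = pi_cls G \<beta> \<longleftrightarrow> tclass G \<alpha> = tclass G \<beta>)))"
proof -
  have wf: "wf_graph G" by (rule assms)
  have A1: "\<forall>\<alpha>\<in>bpaths G.
        invariant G (rho G :: ('v,'e,'k::field) rep) (Vspan (tclass G \<alpha>)) \<and>
        irreducible_alg G (rho_cls G \<alpha> :: ('v,'e,'k) rep)"
  proof
    fix \<alpha> assume \<alpha>: "\<alpha> \<in> bpaths G"
    have "invariant G (rho G :: ('v,'e,'k::field) rep) (Vspan (tclass G \<alpha>))"
      unfolding invariant_def
    proof (intro allI impI ballI)
      fix a :: "('v,'e,'k) lexpr" and f :: "_ \<Rightarrow> 'k"
      assume a: "wf_expr G a" and f: "f \<in> Vspan (tclass G \<alpha>)"
      have "f \<in> Vspan (bpaths G)" using f tclass_sub[of G \<alpha>] by (auto simp: Vspan_def)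
      then have "snd (rho G) a f = evalop G a f" using snd_rr[OF a] by (simp add: rho_def)
      then show "snd (rho G) a f \<in> Vspan (tclass G \<alpha>)"
        using Vspan_inv[OF wf sat_tclass[OF wf] a f] by simp
    qed
    then show "invariant G (rho G :: ('v,'e,'k::field) rep) (Vspan (tclass G \<alpha>)) \<and>
        irreducible_alg G (rho_cls G \<alpha> :: ('v,'e,'k) rep)"
      using alg_irred[OF wf \<alpha>] by blast
  qed
  have B1: "\<forall>\<alpha>\<in>bpaths G.
        l2closed (ell2 (tclass G \<alpha>)) \<and>
        invariant G (piE G) (ell2 (tclass G \<alpha>)) \<and>
        irreducible_hil G (pi_cls G \<alpha>)"
  proof
    fix \<alpha> assume \<alpha>: "\<alpha> \<in> bpaths G"
    have "invariant G (piE G) (ell2 (tclass G \<alpha>))"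
      unfolding invariant_def
    proof (intro allI impI ballI)
      fix a :: "('v,'e,complex) lexpr" and f
      assume a: "wf_expr G a" and f: "f \<in> ell2 (tclass G \<alpha>)"
      have "f \<in> ell2 (bpaths G)" using f tclass_sub[of G \<alpha>] unfolding ell2_def by blast
      then have "snd (piE G) a f = evalop G a f" using snd_rr[OF a] by (simp add: piE_def)
      then show "snd (piE G) a f \<in> ell2 (tclass G \<alpha>)"
        using ell2_inv[OF wf sat_tclass[OF wf] a f] by simp
    qed
    then show "l2closed (ell2 (tclass G \<alpha>)) \<and> invariant G (piE G) (ell2 (tclass G \<alpha>)) \<and>
        irreducible_hil G (pi_cls G \<alpha>)"
      using hil_irred[OF wf \<alpha>] ell2_closed by blast
  qed
  show ?thesis
    using A1 B1 alg_dsum[OF wf] alg_rsum[OF wf] hil_dsum[OF wf] hil_rsum[OF wf]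
      alg_equiv[OF wf] hil_equiv[OF wf]
    by blast
qed

end
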